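(* Let $k \geq 3$ and let $F$ be a $k$-edge graph with $\gamma(F)=1$. Let $s\ge 1$ and let $\Gamma_1,\dots,\Gamma_s$ be pairwise vertex-disjoint graphs such that, for each $j \in [s]$, $\Gamma_j$ is either a pure $(|E(\Gamma_j)|,F)$-special graph or a copy of $F+e$ for some $e \in E(\overline{F})$. For each $j \in \{2,\dots,s\}$ let $v_j \in V(\Gamma_1)$ and $w_j \in V(\Gamma_j)$. Let $\Gamma$ be the graph with vertex set $\bigcup_{j=1}^s V(\Gamma_j)$ and edge set $\bigcup_{j=1}^s E(\Gamma_j)\cup\{v_jw_j \colon 2\le j\le s\}$, and let $m = |E(\Gamma)|$. If $\iota(\Gamma,F) = \frac{m+1}{k+2}$, then $\Gamma$ is an $(m,F)$-special graph or a copy of $F+e$ for some $e\in E(\overline{F})$.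
   Context: All graphs are finite and simple; $[s]=\{1,\dots,s\}$. For $D \subseteq V(G)$, $N_G[D]$ is the closed neighbourhood of $D$. A set $D \subseteq V(G)$ is an $F$-isolating set of $G$ if $G - N_G[D]$ contains no subgraph isomorphic to $F$; $\iota(G,F)$ is the minimum size of such a set. $\gamma(F)=1$ means $F$ has a vertex adjacent to all other vertices of $F$. $\overline{F}$ is the complement of $F$ and $F+e = (V(F),E(F)\cup\{e\})$. ($m,F$)-special graphs: let $F$ be a connected $k$-edge graph. Write $m+1 = q(k+2)+r$ with integers $q \ge 0$, $0 \le r \le k+1$. If $q = 0$, an $(m,F)$-special graph is any connected $m$-edge graph. If $q \geq 1$, take distinct vertices $v_1,\dots,v_q$, copies $F_1,\dots,F_q$ of $F$ such that $V(F_1),\dots,V(F_q),\{v_1,\dots,v_q\}$ are pairwise disjoint, vertices $w_i \in V(F_i)$, and let $G_i$ be the graph with vertex set $\{v_i\}\cup V(F_i)$ and edge set $E(F_i)\cup\{v_iw_i\}$. Let $T$ be a tree with vertex set $\{v_1,\dots,v_q\}$ (the quotient graph) and $T'$ a connected $r$-edge graph with $V(T') \cap \bigcup_i V(G_i) = \{v_q\}$ (the remainder graph). The graph with vertex set $V(T')\cup\bigcup_i V(G_i)$ and edge set $E(T)\cup E(T')\cup \bigcup_i E(G_i)$ is an $(m,F)$-special graph. It is pure if $q\ge1$ and $T'$ has no edges (so $m+1=q(k+2)$). *)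

theory Defs
  imports Complex_Main
begin

definition simple_graph :: "'a set \<Rightarrow> 'a set set \<Rightarrow> bool" where
  "simple_graph V E \<longleftrightarrow> finite V \<and> (\<forall>e\<in>E. e \<subseteq> V \<and> card e = 2)"

definition adj_rel :: "'a set set \<Rightarrow> ('a \<times> 'a) set" where
  "adj_rel E = {(x, y). {x, y} \<in> E}"

definition connected_graph :: "'a set \<Rightarrow> 'a set set \<Rightarrow> bool" where
  "connected_graph V E \<longleftrightarrow> V \<noteq> {} \<and> (\<forall>x\<in>V. \<forall>y\<in>V. (x, y) \<in> (adj_rel E)\<^sup>*)"

definition tree_graph :: "'a set \<Rightarrow> 'a set set \<Rightarrow> bool" where
  "tree_graph V E \<longleftrightarrow> simple_graph V E \<and> connected_graph V E \<and> card E + 1 = card V"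

definition graph_iso :: "'b set \<Rightarrow> 'b set set \<Rightarrow> 'a set \<Rightarrow> 'a set set \<Rightarrow> bool" where
  "graph_iso V1 E1 V2 E2 \<longleftrightarrow> (\<exists>f. bij_betw f V1 V2 \<and> E2 = (\<lambda>e. f ` e) ` E1)"

definition has_subgraph :: "'a set \<Rightarrow> 'a set set \<Rightarrow> 'b set \<Rightarrow> 'b set set \<Rightarrow> bool" where
  "has_subgraph VH EH VF EF \<longleftrightarrow>
     (\<exists>f. inj_on f VF \<and> f ` VF \<subseteq> VH \<and> (\<forall>e\<in>EF. f ` e \<in> EH))"

definition closed_nbhd :: "'a set \<Rightarrow> 'a set set \<Rightarrow> 'a set \<Rightarrow> 'a set" where
  "closed_nbhd V E D = D \<union> {y\<in>V. \<exists>x\<in>D. {x, y} \<in> E}"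

definition isolating_set :: "'a set \<Rightarrow> 'a set set \<Rightarrow> 'b set \<Rightarrow> 'b set set \<Rightarrow> 'a set \<Rightarrow> bool" where
  "isolating_set V E VF EF D \<longleftrightarrow> D \<subseteq> V \<and>
     (let U = V - closed_nbhd V E D in \<not> has_subgraph U {e\<in>E. e \<subseteq> U} VF EF)"

definition iota :: "'a set \<Rightarrow> 'a set set \<Rightarrow> 'b set \<Rightarrow> 'b set set \<Rightarrow> nat" where
  "iota V E VF EF = (LEAST n. \<exists>D. isolating_set V E VF EF D \<and> card D = n)"

text \<open>gamma(F) = 1: some vertex adjacent to all others.\<close>
definition dom_one :: "'b set \<Rightarrow> 'b set set \<Rightarrow> bool" where
  "dom_one VF EF \<longleftrightarrow> (\<exists>u\<in>VF. \<forall>x\<in>VF. x \<noteq> u \<longrightarrow> {u, x} \<in> EF)"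

definition copy_F_plus_e :: "'b set \<Rightarrow> 'b set set \<Rightarrow> 'a set \<Rightarrow> 'a set set \<Rightarrow> bool" where
  "copy_F_plus_e VF EF V E \<longleftrightarrow>
     (\<exists>e. e \<subseteq> VF \<and> card e = 2 \<and> e \<notin> EF \<and> graph_iso VF (insert e EF) V E)"

definition special_constr :: "nat \<Rightarrow> nat \<Rightarrow> 'b set \<Rightarrow> 'b set set \<Rightarrow> 'a set \<Rightarrow> 'a set set \<Rightarrow> bool" where
  "special_constr q r VF EF V E \<longleftrightarrow>
     (\<exists>(vv :: nat \<Rightarrow> 'a) (FV :: nat \<Rightarrow> 'a set) (FE :: nat \<Rightarrow> 'a set set) (ww :: nat \<Rightarrow> 'a)
        (TE :: 'a set set) (TV' :: 'a set) (TE' :: 'a set set).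
        inj_on vv {1..q} \<and>
        (\<forall>i\<in>{1..q}. graph_iso VF EF (FV i) (FE i)) \<and>
        (\<forall>i\<in>{1..q}. \<forall>j\<in>{1..q}. i \<noteq> j \<longrightarrow> FV i \<inter> FV j = {}) \<and>
        (\<forall>i\<in>{1..q}. FV i \<inter> vv ` {1..q} = {}) \<and>
        (\<forall>i\<in>{1..q}. ww i \<in> FV i) \<and>
        tree_graph (vv ` {1..q}) TE \<and>
        simple_graph TV' TE' \<and> connected_graph TV' TE' \<and> card TE' = r \<and>
        TV' \<inter> (\<Union>i\<in>{1..q}. insert (vv i) (FV i)) = {vv q} \<and>
        V = TV' \<union> (\<Union>i\<in>{1..q}. insert (vv i) (FV i)) \<and>
        E = TE \<union> TE' \<union> (\<Union>i\<in>{1..q}. insert {vv i, ww i} (FE i)))"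

definition special :: "nat \<Rightarrow> 'b set \<Rightarrow> 'b set set \<Rightarrow> 'a set \<Rightarrow> 'a set set \<Rightarrow> bool" where
  "special m VF EF V E \<longleftrightarrow>
     (let k = card EF; q = (m + 1) div (k + 2); r = (m + 1) mod (k + 2) in
      if q = 0 then simple_graph V E \<and> connected_graph V E \<and> card E = m
      else special_constr q r VF EF V E)"

definition pure_special :: "nat \<Rightarrow> 'b set \<Rightarrow> 'b set set \<Rightarrow> 'a set \<Rightarrow> 'a set set \<Rightarrow> bool" where
  "pure_special m VF EF V E \<longleftrightarrow>
     (let k = card EF; q = (m + 1) div (k + 2) in
      q \<ge> 1 \<and> (m + 1) mod (k + 2) = 0 \<and> special_constr q 0 VF EF V E)"

end

theory Submission
  imports Defs
begin

definition safe :: "'b set \<Rightarrow> 'b set set \<Rightarrow> 'a set set \<Rightarrow> 'a set \<Rightarrow> bool" where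
  "safe VF EF E R \<longleftrightarrow> (\<forall>f. inj_on f VF \<longrightarrow> f ` VF \<subseteq> R \<longrightarrow> \<not> (\<forall>e\<in>EF. f ` e \<in> E))"

definition pdec :: "nat \<Rightarrow> 'b set \<Rightarrow> 'b set set \<Rightarrow> 'a set \<Rightarrow> 'a set set \<Rightarrow> (nat \<Rightarrow> 'a)
   \<Rightarrow> (nat \<Rightarrow> 'a set) \<Rightarrow> (nat \<Rightarrow> 'a set set) \<Rightarrow> (nat \<Rightarrow> 'a) \<Rightarrow> 'a set set \<Rightarrow> bool" where
  "pdec q VF EF V E vv FV FE ww TE \<longleftrightarrow> q \<ge> 1 \<and>
        inj_on vv {1..q} \<and>
        (\<forall>i\<in>{1..q}. graph_iso VF EF (FV i) (FE i)) \<and>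
        (\<forall>i\<in>{1..q}. \<forall>j\<in>{1..q}. i \<noteq> j \<longrightarrow> FV i \<inter> FV j = {}) \<and>
        (\<forall>i\<in>{1..q}. FV i \<inter> vv ` {1..q} = {}) \<and>
        (\<forall>i\<in>{1..q}. ww i \<in> FV i) \<and>
        tree_graph (vv ` {1..q}) TE \<and>
        V = (\<Union>i\<in>{1..q}. insert (vv i) (FV i)) \<and>
        E = TE \<union> (\<Union>i\<in>{1..q}. insert {vv i, ww i} (FE i))"

lemma safe_small:
  assumes "finite R" "card R < card VF" shows "safe VF EF E R"
  unfolding safe_def
proof (intro allI impI)
  fix f assume "inj_on f VF" "f ` VF \<subseteq> R"
  then have "card VF \<le> card R" using assms(1) card_image card_mono by metis
  then show "\<not> (\<forall>e\<in>EF. f ` e \<in> E)" using assms(2) by simp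
qed

lemma safe_mono:
  assumes "R' \<subseteq> R" "safe VF EF E R" shows "safe VF EF E R'"
  using assms unfolding safe_def by blast

lemma adj_sym: "(x, y) \<in> (adj_rel E)\<^sup>* \<Longrightarrow> (y, x) \<in> (adj_rel E)\<^sup>*"
proof -
  assume a: "(x, y) \<in> (adj_rel E)\<^sup>*"
  have "(adj_rel E)\<inverse> = adj_rel E" unfolding adj_rel_def by (auto simp: insert_commute)
  then have "((adj_rel E)\<^sup>*)\<inverse> = (adj_rel E)\<^sup>*" by (metis rtrancl_converse)
  with a show ?thesis by blast
qed

lemma adj_mono: "E \<subseteq> E' \<Longrightarrow> (x, y) \<in> (adj_rel E)\<^sup>* \<Longrightarrow> (x, y) \<in> (adj_rel E')\<^sup>*"
proof -
  assume "E \<subseteq> E'" "(x, y) \<in> (adj_rel E)\<^sup>*"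
  moreover have "adj_rel E \<subseteq> adj_rel E'" using \<open>E \<subseteq> E'\<close> unfolding adj_rel_def by auto
  ultimately show ?thesis using rtrancl_mono by blast
qed

lemma tree_nbr:
  assumes "tree_graph T TE" "x \<in> T" "t \<in> T" "t \<noteq> x"
  shows "\<exists>t'. t' \<in> T \<and> t' \<noteq> x \<and> {x, t'} \<in> TE"
proof -
  have "(x, t) \<in> (adj_rel TE)\<^sup>*" using assms unfolding tree_graph_def connected_graph_def by blast
  then obtain y where "(x, y) \<in> adj_rel TE" using assms(4)
    by (metis converse_rtranclE)
  then have e: "{x, y} \<in> TE" unfolding adj_rel_def by simp
  then have "{x, y} \<subseteq> T" "card {x, y} = 2" using assms(1) unfolding tree_graph_def simple_graph_def by auto
  moreover have "y \<noteq> x" using \<open>card {x, y} = 2\<close> by (cases "y = x") auto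
  ultimately show ?thesis using e by blast
qed

lemma closed_nbhd_in: "y \<in> V \<Longrightarrow> d \<in> D \<Longrightarrow> {d, y} \<in> E \<Longrightarrow> y \<in> closed_nbhd V E D"
  unfolding closed_nbhd_def by blast

lemma closed_nbhd_D: "D \<subseteq> closed_nbhd V E D"
  unfolding closed_nbhd_def by blast

lemma closed_nbhd_empty[simp]: "closed_nbhd V E {} = {}"
  unfolding closed_nbhd_def by blast


lemma pdec_parts:
  assumes "pdec q VF EF V E vv FV FE ww TE"
  shows "q \<ge> 1" "inj_on vv {1..q}"
        "(\<forall>i\<in>{1..q}. graph_iso VF EF (FV i) (FE i))"
        "(\<forall>i\<in>{1..q}. \<forall>j\<in>{1..q}. i \<noteq> j \<longrightarrow> FV i \<inter> FV j = {})"
        "(\<forall>i\<in>{1..q}. FV i \<inter> vv ` {1..q} = {})"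
        "(\<forall>i\<in>{1..q}. ww i \<in> FV i)"
        "tree_graph (vv ` {1..q}) TE"
        "V = (\<Union>i\<in>{1..q}. insert (vv i) (FV i))"
        "E = TE \<union> (\<Union>i\<in>{1..q}. insert {vv i, ww i} (FE i))"
  using assms unfolding pdec_def by blast+

lemma card_S1: "finite A \<Longrightarrow> c \<in> A \<Longrightarrow> card (A - {c}) < card A"
  by (rule card_Diff1_less)

lemma card_S2:
  assumes "finite A" "x \<notin> A" "y \<in> A" "y' \<in> A" "y \<noteq> y'"
  shows "card (insert x A - {y, y'}) < card A"
proof -
  have "{y, y'} \<subseteq> insert x A" using assms by blast
  then have "card (insert x A - {y, y'}) = card (insert x A) - card {y, y'}"
    using assms(1) by (simp add: card_Diff_subset)
  also have "\<dots> = card A + 1 - 2" using assms by simp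
  finally show ?thesis using assms card_mono[of A "{y,y'}"] by simp
qed

locale Fctx =
  fixes VF :: "'b set" and EF :: "'b set set" and uF :: 'b
  assumes F_sg: "simple_graph VF EF" and uF: "uF \<in> VF"
    and uF_dom: "\<forall>x\<in>VF. x \<noteq> uF \<longrightarrow> {uF, x} \<in> EF" and EF_ne: "EF \<noteq> {}"
begin

lemma finVF: "finite VF" using F_sg unfolding simple_graph_def by simp

lemma finEF: "finite EF"
proof -
  have "EF \<subseteq> Pow VF" using F_sg unfolding simple_graph_def by auto
  then show ?thesis using finVF finite_subset by blast
qed

lemma other: "\<exists>x\<in>VF. x \<noteq> uF"
proof -
  obtain e where e: "e \<in> EF" using EF_ne by blast
  then have "e \<subseteq> VF" "card e = 2" using F_sg unfolding simple_graph_def by auto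
  then obtain a b where "e = {a, b}" "a \<noteq> b" by (meson card_2_iff)
  then have "a \<in> VF" "b \<in> VF" using \<open>e \<subseteq> VF\<close> by auto
  then show ?thesis using \<open>a \<noteq> b\<close> by metis
qed

lemma nbr: assumes "b \<in> VF" shows "\<exists>b'\<in>VF. b' \<noteq> b \<and> {b, b'} \<in> EF"
proof (cases "b = uF")
  case True
  then show ?thesis using other uF_dom by blast
next
  case False
  then have "{uF, b} \<in> EF" using uF_dom assms by blast
  then have "{b, uF} \<in> EF" by (simp add: insert_commute)
  then show ?thesis using uF False by (intro bexI[of _ uF]) auto
qed

lemma safe_sparse:
  assumes "finite R"
    and "\<forall>z\<in>R. \<exists>S. finite S \<and> card S < card VF \<and> {y\<in>R. y = z \<or> {z, y} \<in> E} \<subseteq> S"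
  shows "safe VF EF E R"
  unfolding safe_def
proof (intro allI impI notI)
  fix f assume inj: "inj_on f VF" and sub: "f ` VF \<subseteq> R" and ed: "\<forall>e\<in>EF. f ` e \<in> E"
  have z: "f uF \<in> R" using sub uF by blast
  then obtain S where S: "finite S" "card S < card VF" "{y\<in>R. y = f uF \<or> {f uF, y} \<in> E} \<subseteq> S"
    using assms(2) by blast
  have "f ` VF \<subseteq> {y\<in>R. y = f uF \<or> {f uF, y} \<in> E}"
  proof
    fix y assume "y \<in> f ` VF"
    then obtain x where x: "x \<in> VF" "y = f x" by blast
    show "y \<in> {y\<in>R. y = f uF \<or> {f uF, y} \<in> E}"
    proof (cases "x = uF")
      case True then show ?thesis using x z by simp
    next
      case False
      then have "{uF, x} \<in> EF" using uF_dom x by blast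
      then have "f ` {uF, x} \<in> E" using ed by blast
      then show ?thesis using x sub by auto
    qed
  qed
  then have "card (f ` VF) \<le> card S" using S by (meson card_mono order_trans)
  then show False using S(2) card_image[OF inj] by simp
qed

lemma iso_props:
  assumes "graph_iso VF EF2 W FE'" "\<forall>e\<in>EF2. e \<subseteq> VF \<and> card e = 2"
  shows "finite W" "card W = card VF" "\<forall>e\<in>FE'. e \<subseteq> W \<and> card e = 2"
proof -
  obtain g where g: "bij_betw g VF W" "FE' = (\<lambda>e. g ` e) ` EF2" using assms(1) unfolding graph_iso_def by blast
  show "finite W" using g(1) finVF bij_betw_finite by blast
  show "card W = card VF" using g(1) bij_betw_same_card by metis
  show "\<forall>e\<in>FE'. e \<subseteq> W \<and> card e = 2"
  proof
    fix e' assume "e' \<in> FE'"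
    then obtain e where e: "e \<in> EF2" "e' = g ` e" using g(2) by blast
    have "inj_on g e" using assms(2) e(1) g(1) unfolding bij_betw_def by (meson inj_on_subset)
    have "e \<subseteq> VF" "card e = 2" using assms(2) e(1) by auto
    then have "g ` e \<subseteq> W" using g(1) unfolding bij_betw_def by blast
    moreover have "card (g ` e) = 2" using card_image[OF \<open>inj_on g e\<close>] \<open>card e = 2\<close> by simp
    ultimately show "e' \<subseteq> W \<and> card e' = 2" using e(2) by simp
  qed
qed

lemma iso_card_E:
  assumes "graph_iso VF EF2 W FE'" "EF2 \<subseteq> Pow VF"
  shows "card FE' = card EF2"
proof -
  obtain g where g: "bij_betw g VF W" "FE' = (\<lambda>e. g ` e) ` EF2" using assms(1) unfolding graph_iso_def by blast
  have "inj_on ((`) g) (Pow VF)" using g(1) inj_on_image_Pow unfolding bij_betw_def by blast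
  then have "inj_on ((`) g) EF2" using assms(2) inj_on_subset by blast
  then show ?thesis using g(2) card_image by metis
qed

lemma iso_nbr:
  assumes "graph_iso VF EF2 W FE'" "EF \<subseteq> EF2" "y \<in> W"
  shows "\<exists>y'\<in>W. y' \<noteq> y \<and> {y, y'} \<in> FE'"
proof -
  obtain g where g: "bij_betw g VF W" "FE' = (\<lambda>e. g ` e) ` EF2" using assms(1) unfolding graph_iso_def by blast
  obtain b where b: "b \<in> VF" "y = g b" using g(1) assms(3) unfolding bij_betw_def by blast
  obtain b' where b': "b' \<in> VF" "b' \<noteq> b" "{b, b'} \<in> EF" using nbr b(1) by blast
  have "g ` {b, b'} \<in> FE'" using g(2) b' assms(2) by blast
  moreover have "g ` {b, b'} = {g b, g b'}" by simp
  ultimately have "{g b, g b'} \<in> FE'" by simp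
  moreover have "g b' \<in> W" "g b' \<noteq> g b" using g(1) b b' unfolding bij_betw_def inj_on_def by auto
  ultimately show ?thesis using b by blast
qed


lemma EF_edges: "\<forall>e\<in>EF. e \<subseteq> VF \<and> card e = 2"
  using F_sg unfolding simple_graph_def by blast

lemma pdec_FV:
  assumes "pdec q VF EF V E vv FV FE ww TE" "i \<in> {1..q}"
  shows "finite (FV i)" "card (FV i) = card VF" "\<forall>e\<in>FE i. e \<subseteq> FV i \<and> card e = 2"
proof -
  have "graph_iso VF EF (FV i) (FE i)" using assms unfolding pdec_def by blast
  then show "finite (FV i)" "card (FV i) = card VF" "\<forall>e\<in>FE i. e \<subseteq> FV i \<and> card e = 2"
    using iso_props EF_edges by blast+
qed

lemma pdec_TE:
  assumes "pdec q VF EF V E vv FV FE ww TE"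
  shows "\<forall>e\<in>TE. e \<subseteq> vv ` {1..q} \<and> card e = 2"
  using assms unfolding pdec_def tree_graph_def simple_graph_def by blast

lemma pdec_cell:
  assumes "pdec q VF EF V E vv FV FE ww TE" "z \<in> V"
  shows "z \<in> vv ` {1..q} \<or> (\<exists>i\<in>{1..q}. z \<in> FV i)"
  using assms unfolding pdec_def by blast

lemma pdec_vvFV:
  assumes "pdec q VF EF V E vv FV FE ww TE" "i \<in> {1..q}" "j \<in> {1..q}"
  shows "vv j \<notin> FV i"
  using assms unfolding pdec_def by blast

lemma pdec_NB1:
  assumes P: "pdec q VF EF V E vv FV FE ww TE" and i: "i \<in> {1..q}" and z: "z \<in> FV i"
    and e: "{z, y} \<in> E"
  shows "y \<in> FV i \<or> (y = vv i \<and> z = ww i)"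
proof -
  have zT: "z \<notin> vv ` {1..q}" using P i z unfolding pdec_def by blast
  have disj: "\<forall>i\<in>{1..q}. \<forall>j\<in>{1..q}. i \<noteq> j \<longrightarrow> FV i \<inter> FV j = {}"
    and ww: "\<forall>i\<in>{1..q}. ww i \<in> FV i"
    and Eeq: "E = TE \<union> (\<Union>i\<in>{1..q}. insert {vv i, ww i} (FE i))" using P unfolding pdec_def by blast+
  have "{z, y} \<notin> TE" using pdec_TE[OF P] zT by blast
  then obtain i' where i': "i' \<in> {1..q}" "{z, y} = {vv i', ww i'} \<or> {z, y} \<in> FE i'" using e Eeq by blast
  show ?thesis
  proof (cases "{z, y} = {vv i', ww i'}")
    case True
    have "vv i' \<in> vv ` {1..q}" using i'(1) by blast
    then have "z \<noteq> vv i'" using zT by blast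
    then have "z = ww i' \<and> y = vv i'" using True unfolding doubleton_eq_iff by blast
    then have "z \<in> FV i'" using ww i'(1) by blast
    have "i' = i"
    proof (rule ccontr)
      assume "i' \<noteq> i"
      then have "FV i' \<inter> FV i = {}" using disj i'(1) i by blast
      then show False using z \<open>z \<in> FV i'\<close> by blast
    qed
    then show ?thesis using \<open>z = ww i' \<and> y = vv i'\<close> by blast
  next
    case False
    then have "{z, y} \<in> FE i'" using i' by blast
    then have "{z, y} \<subseteq> FV i'" using pdec_FV(3)[OF P i'(1)] by blast
    have "i' = i"
    proof (rule ccontr)
      assume "i' \<noteq> i"
      then have "FV i' \<inter> FV i = {}" using disj i'(1) i by blast
      then show False using z \<open>{z, y} \<subseteq> FV i'\<close> by blast
    qed
    then show ?thesis using \<open>{z, y} \<subseteq> FV i'\<close> by blast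
  qed
qed

lemma pdec_NB2:
  assumes P: "pdec q VF EF V E vv FV FE ww TE" and i: "i \<in> {1..q}"
    and e: "{vv i, y} \<in> E"
  shows "y \<in> vv ` {1..q} \<or> y = ww i"
proof -
  have inj: "inj_on vv {1..q}"
    and Eeq: "E = TE \<union> (\<Union>i\<in>{1..q}. insert {vv i, ww i} (FE i))" using P unfolding pdec_def by blast+
  show ?thesis
  proof (cases "{vv i, y} \<in> TE")
    case True then show ?thesis using pdec_TE[OF P] by blast
  next
    case False
    then obtain i' where i': "i' \<in> {1..q}" "{vv i, y} = {vv i', ww i'} \<or> {vv i, y} \<in> FE i'" using e Eeq by blast
    show ?thesis
    proof (cases "{vv i, y} = {vv i', ww i'}")
      case True
      have "ww i' \<in> FV i'" using P i'(1) unfolding pdec_def by blast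
      then have "vv i \<noteq> ww i'" using pdec_vvFV[OF P i'(1) i] by metis
      then have "vv i = vv i' \<and> y = ww i'" using True unfolding doubleton_eq_iff by blast
      then have "i = i'" using inj i i' unfolding inj_on_def by blast
      then show ?thesis using \<open>vv i = vv i' \<and> y = ww i'\<close> by blast
    next
      case False
      then have "{vv i, y} \<in> FE i'" using i' by blast
      then have "vv i \<in> FV i'" using pdec_FV(3)[OF P i'(1)] by blast
      then show ?thesis using pdec_vvFV[OF P i'(1) i] by blast
    qed
  qed
qed

lemma pdec_simple:
  assumes P: "pdec q VF EF V E vv FV FE ww TE"
  shows "simple_graph V E" "finite V"
proof -
  have Veq: "V = (\<Union>i\<in>{1..q}. insert (vv i) (FV i))"
    and Eeq: "E = TE \<union> (\<Union>i\<in>{1..q}. insert {vv i, ww i} (FE i))"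
    and ww: "\<forall>i\<in>{1..q}. ww i \<in> FV i" using P unfolding pdec_def by blast+
  show fin: "finite V" using Veq pdec_FV(1)[OF P] by auto
  have "\<forall>e\<in>E. e \<subseteq> V \<and> card e = 2"
  proof
    fix e assume "e \<in> E"
    then consider "e \<in> TE" | i where "i \<in> {1..q}" "e = {vv i, ww i}" | i where "i \<in> {1..q}" "e \<in> FE i"
      using Eeq by blast
    then show "e \<subseteq> V \<and> card e = 2"
    proof cases
      case 1 then show ?thesis using pdec_TE[OF P] Veq by blast
    next
      case (2 i)
      have "vv i \<noteq> ww i" using pdec_vvFV[OF P 2(1) 2(1)] ww 2(1) by metis
      moreover have "insert (vv i) (FV i) \<subseteq> V" using Veq 2(1) by blast
      moreover have "ww i \<in> FV i" using ww 2(1) by blast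
      ultimately have "vv i \<in> V" "ww i \<in> V" by blast+
      then show ?thesis using 2(2) \<open>vv i \<noteq> ww i\<close> by simp
    next
      case (3 i) then show ?thesis using pdec_FV(3)[OF P 3(1)] Veq by blast
    qed
  qed
  then show "simple_graph V E" using fin unfolding simple_graph_def by blast
qed

end

lemma sc_to_pdec:
  assumes "q \<ge> 1" "special_constr q 0 VF EF V E"
  shows "\<exists>vv FV FE ww TE. pdec q VF EF V E vv FV FE ww TE"
proof -
  obtain vv FV FE ww TE TV' TE' where W:
        "inj_on vv {1..q}"
        "(\<forall>i\<in>{1..q}. graph_iso VF EF (FV i) (FE i))"
        "(\<forall>i\<in>{1..q}. \<forall>j\<in>{1..q}. i \<noteq> j \<longrightarrow> FV i \<inter> FV j = {})"
        "(\<forall>i\<in>{1..q}. FV i \<inter> vv ` {1..q} = {})"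
        "(\<forall>i\<in>{1..q}. ww i \<in> FV i)"
        "tree_graph (vv ` {1..q}) TE"
        "simple_graph TV' TE'" "connected_graph TV' TE'" "card TE' = 0"
        "TV' \<inter> (\<Union>i\<in>{1..q}. insert (vv i) (FV i)) = {vv q}"
        "V = TV' \<union> (\<Union>i\<in>{1..q}. insert (vv i) (FV i))"
        "E = TE \<union> TE' \<union> (\<Union>i\<in>{1..q}. insert {vv i, ww i} (FE i))"
    using assms(2) unfolding special_constr_def by blast
  have "TE' \<subseteq> Pow TV'" "finite TV'" using W(7) unfolding simple_graph_def by auto
  then have "finite TE'" by (meson finite_Pow_iff finite_subset)
  then have TE': "TE' = {}" using W(9) by simp
  have "adj_rel {} = {}" unfolding adj_rel_def by simp
  then have "\<forall>x\<in>TV'. \<forall>y\<in>TV'. x = y" using W(8) TE' unfolding connected_graph_def by (metis rtrancl_empty pair_in_Id_conv)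
  moreover have "vv q \<in> TV'" using W(10) by blast
  ultimately have "TV' = {vv q}" by blast
  moreover have "vv q \<in> (\<Union>i\<in>{1..q}. insert (vv i) (FV i))" using assms(1) by auto
  ultimately have Veq: "V = (\<Union>i\<in>{1..q}. insert (vv i) (FV i))" using W(11) by blast
  have Eeq: "E = TE \<union> (\<Union>i\<in>{1..q}. insert {vv i, ww i} (FE i))" using W(12) TE' by simp
  have "pdec q VF EF V E vv FV FE ww TE" unfolding pdec_def
    by (intro conjI assms(1) W(1) W(2) W(3) W(4) W(5) W(6) Veq Eeq)
  then show ?thesis by blast
qed

lemma pdec_to_sc:
  fixes V :: "'a set" and VF :: "'b set"
  assumes "pdec q VF EF V E vv FV FE ww TE"
  shows "special_constr q 0 VF EF V E"
proof -
  have P: "q \<ge> 1" "inj_on vv {1..q}"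
        "(\<forall>i\<in>{1..q}. graph_iso VF EF (FV i) (FE i))"
        "(\<forall>i\<in>{1..q}. \<forall>j\<in>{1..q}. i \<noteq> j \<longrightarrow> FV i \<inter> FV j = {})"
        "(\<forall>i\<in>{1..q}. FV i \<inter> vv ` {1..q} = {})"
        "(\<forall>i\<in>{1..q}. ww i \<in> FV i)"
        "tree_graph (vv ` {1..q}) TE"
        "V = (\<Union>i\<in>{1..q}. insert (vv i) (FV i))"
        "E = TE \<union> (\<Union>i\<in>{1..q}. insert {vv i, ww i} (FE i))"
    using assms unfolding pdec_def by blast+
  have a: "simple_graph {vv q} {}" unfolding simple_graph_def by simp
  have b: "connected_graph {vv q} {}" unfolding connected_graph_def by simp
  have c: "card ({}::'a set set) = 0" by (rule card.empty)
  have d: "{vv q} \<inter> (\<Union>i\<in>{1..q}. insert (vv i) (FV i)) = {vv q}" using P(1) by auto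
  have e: "V = {vv q} \<union> (\<Union>i\<in>{1..q}. insert (vv i) (FV i))" using P(1) P(8) by auto
  have f: "E = TE \<union> {} \<union> (\<Union>i\<in>{1..q}. insert {vv i, ww i} (FE i))" using P(9) by simp
  show ?thesis unfolding special_constr_def
    apply (rule exI[of _ vv], rule exI[of _ FV], rule exI[of _ FE], rule exI[of _ ww], rule exI[of _ TE],
           rule exI[of _ "{vv q}"], rule exI[of _ "{}"])
    by (intro conjI P(2) P(3) P(4) P(5) P(6) P(7) a b c d e f)
qed


context Fctx begin

lemma A_pure:
  assumes P: "pdec q VF EF V E vv FV FE ww TE" and y: "y \<in> V"
  shows "\<exists>D\<subseteq>V. y \<in> D \<and> card D \<le> q \<and> safe VF EF E (V - closed_nbhd V E D)"
proof -
  note PP = pdec_parts[OF P]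
  define T where "T = vv ` {1..q}"
  have TV: "T \<subseteq> V" using PP(8) unfolding T_def by blast
  have finV: "finite V" using pdec_simple[OF P] by blast
  have cardT: "card T = q" unfolding T_def using PP(2) card_image by fastforce
  have wwE: "\<And>i. i \<in> {1..q} \<Longrightarrow> {vv i, ww i} \<in> E" using PP(9) by blast
  have wwV: "\<And>i. i \<in> {1..q} \<Longrightarrow> ww i \<in> V" using PP(8) PP(6) by blast
  have vvV: "\<And>i. i \<in> {1..q} \<Longrightarrow> vv i \<in> V" using PP(8) by blast
  have vvT: "\<And>i. i \<in> {1..q} \<Longrightarrow> vv i \<in> T" unfolding T_def by blast
  have vvinj: "\<And>i j. i \<in> {1..q} \<Longrightarrow> j \<in> {1..q} \<Longrightarrow> vv i = vv j \<Longrightarrow> i = j"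
    using PP(2) unfolding inj_on_def by blast
  have FVT: "\<And>i z. i \<in> {1..q} \<Longrightarrow> z \<in> FV i \<Longrightarrow> z \<notin> T" using PP(5) unfolding T_def by blast
  show ?thesis
  proof (cases "y \<in> T")
    case True
    let ?R = "V - closed_nbhd V E T"
    have "safe VF EF E ?R"
    proof (rule safe_sparse)
      show "finite ?R" using finV by blast
      show "\<forall>z\<in>?R. \<exists>S. finite S \<and> card S < card VF \<and> {y\<in>?R. y = z \<or> {z, y} \<in> E} \<subseteq> S"
      proof
        fix z assume z: "z \<in> ?R"
        then have "z \<notin> T" using closed_nbhd_D[of T V E] by blast
        then obtain i where i: "i \<in> {1..q}" "z \<in> FV i" using pdec_cell[OF P] z unfolding T_def by blast
        have wwN: "ww i \<notin> ?R" using closed_nbhd_in[OF wwV[OF i(1)] vvT[OF i(1)] wwE[OF i(1)]] by blast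
        have "{y\<in>?R. y = z \<or> {z, y} \<in> E} \<subseteq> FV i - {ww i}"
        proof
          fix y' assume y': "y' \<in> {y\<in>?R. y = z \<or> {z, y} \<in> E}"
          show "y' \<in> FV i - {ww i}"
          proof (cases "y' = z")
            case True then show ?thesis using i wwN z by blast
          next
            case False
            then have "{z, y'} \<in> E" using y' by blast
            then have "y' \<in> FV i \<or> y' = vv i" using pdec_NB1[OF P i] by blast
            moreover have "vv i \<notin> ?R" using vvT[OF i(1)] closed_nbhd_D[of T V E] by blast
            ultimately show ?thesis using y' wwN by blast
          qed
        qed
        moreover have "card (FV i - {ww i}) < card VF"
          using card_S1[OF pdec_FV(1)[OF P i(1)], of "ww i"] PP(6) i(1) pdec_FV(2)[OF P i(1)] by simp
        ultimately show "\<exists>S. finite S \<and> card S < card VF \<and> {y\<in>?R. y = z \<or> {z, y} \<in> E} \<subseteq> S"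
          using pdec_FV(1)[OF P i(1)] by blast
      qed
    qed
    then show ?thesis using True TV cardT by blast
  next
    case False
    then obtain i0 where i0: "i0 \<in> {1..q}" "y \<in> FV i0" using pdec_cell[OF P y] unfolding T_def by blast
    obtain y' where y': "y' \<in> FV i0" "y' \<noteq> y" "{y, y'} \<in> FE i0"
      using iso_nbr[of EF "FV i0" "FE i0" y] PP(3) i0 by blast
    define D where "D = insert y (T - {vv i0})"
    have DV: "D \<subseteq> V" unfolding D_def using TV y by blast
    have cardD: "card D \<le> q"
    proof -
      have "finite (T - {vv i0})" unfolding T_def by blast
      then have "card D \<le> card (T - {vv i0}) + 1" unfolding D_def
        by (simp add: card_insert_if)
      also have "\<dots> = q" using cardT vvT[OF i0(1)] PP(1) unfolding T_def
        by (simp add: card_Diff_singleton)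
      finally show ?thesis .
    qed
    let ?R = "V - closed_nbhd V E D"
    have yN: "y \<notin> ?R" using closed_nbhd_D[of D V E] unfolding D_def by blast
    have y'E: "{y, y'} \<in> E" using PP(9) y' i0 by blast
    have y'V: "y' \<in> V" using PP(8) y' i0 by blast
    have y'N: "y' \<notin> ?R" using closed_nbhd_in[OF y'V _ y'E, of D] unfolding D_def by blast
    have TR: "T \<inter> ?R \<subseteq> {vv i0}" using closed_nbhd_D[of D V E] unfolding D_def by blast
    have cell0: "\<And>z. z \<in> ?R \<Longrightarrow> (z = vv i0 \<or> z \<in> FV i0) \<Longrightarrow>
        {y\<in>?R. y = z \<or> {z, y} \<in> E} \<subseteq> insert (vv i0) (FV i0) - {y, y'}"
    proof
      fix z y'' assume z: "z \<in> ?R" "z = vv i0 \<or> z \<in> FV i0" and y'': "y'' \<in> {y\<in>?R. y = z \<or> {z, y} \<in> E}"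
      have "y'' \<in> insert (vv i0) (FV i0)"
      proof (cases "y'' = z")
        case True then show ?thesis using z by blast
      next
        case False
        then have e: "{z, y''} \<in> E" using y'' by blast
        show ?thesis
        proof (cases "z = vv i0")
          case True
          then have "{vv i0, y''} \<in> E" using e by simp
          then have "y'' \<in> T \<or> y'' = ww i0" using pdec_NB2[OF P i0(1), of y''] unfolding T_def by blast
          then show ?thesis using TR y'' PP(6) i0(1) by blast
        next
          case False
          then show ?thesis using pdec_NB1[OF P i0(1) _ e] z by blast
        qed
      qed
      then show "y'' \<in> insert (vv i0) (FV i0) - {y, y'}" using y'' yN y'N by blast
    qed
    have "safe VF EF E ?R"
    proof (rule safe_sparse)
      show "finite ?R" using finV by blast
      show "\<forall>z\<in>?R. \<exists>S. finite S \<and> card S < card VF \<and> {y\<in>?R. y = z \<or> {z, y} \<in> E} \<subseteq> S"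
      proof
        fix z assume z: "z \<in> ?R"
        have S2': "card (insert (vv i0) (FV i0) - {y, y'}) < card (FV i0)"
          using card_S2[OF pdec_FV(1)[OF P i0(1)] pdec_vvFV[OF P i0(1) i0(1)] i0(2) y'(1)] y'(2) by blast
        have S2: "card (insert (vv i0) (FV i0) - {y, y'}) < card VF"
          using S2' pdec_FV(2)[OF P i0(1)] by simp
        have fin2: "finite (insert (vv i0) (FV i0) - {y, y'})" using pdec_FV(1)[OF P i0(1)] by blast
        consider "z \<in> T" | i where "i \<in> {1..q}" "z \<in> FV i" using pdec_cell[OF P] z unfolding T_def by blast
        then show "\<exists>S. finite S \<and> card S < card VF \<and> {y\<in>?R. y = z \<or> {z, y} \<in> E} \<subseteq> S"
        proof cases
          case 1
          then have "z = vv i0" using TR z by blast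
          then show ?thesis using cell0[OF z] S2 fin2 by blast
        next
          case (2 i)
          show ?thesis
          proof (cases "i = i0")
            case True
            then show ?thesis using cell0[OF z] 2 S2 fin2 by blast
          next
            case False
            have "vv i \<noteq> vv i0" using vvinj[OF 2(1) i0(1)] False by blast
            then have vD: "vv i \<in> D" unfolding D_def using vvT[OF 2(1)] by blast
            have wwN: "ww i \<notin> ?R" using closed_nbhd_in[OF wwV[OF 2(1)] vD wwE[OF 2(1)]] by blast
            have "{y\<in>?R. y = z \<or> {z, y} \<in> E} \<subseteq> FV i - {ww i}"
            proof
              fix y'' assume y'': "y'' \<in> {y\<in>?R. y = z \<or> {z, y} \<in> E}"
              show "y'' \<in> FV i - {ww i}"
              proof (cases "y'' = z")
                case True then show ?thesis using 2 wwN z by blast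
              next
                case False
                then have "{z, y''} \<in> E" using y'' by blast
                then have "y'' \<in> FV i \<or> y'' = vv i" using pdec_NB1[OF P 2(1) 2(2)] by blast
                moreover have "vv i \<notin> ?R" using vD closed_nbhd_D[of D V E] by blast
                ultimately show ?thesis using y'' wwN by blast
              qed
            qed
            moreover have "card (FV i - {ww i}) < card VF"
              using card_S1[OF pdec_FV(1)[OF P 2(1)], of "ww i"] PP(6) 2(1) pdec_FV(2)[OF P 2(1)] by simp
            ultimately show ?thesis using pdec_FV(1)[OF P 2(1)] by blast
          qed
        qed
      qed
    qed
    then show ?thesis using DV cardD D_def by blast
  qed
qed


lemma pdec_cellbound:
  assumes P: "pdec q VF EF V E vv FV FE ww TE" and i: "i \<in> {1..q}" and z: "z \<in> FV i"
    and c: "c \<in> FV i" "c \<notin> R" and v: "vv i \<notin> R"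
  shows "{y\<in>R. y = z \<or> {z, y} \<in> E} \<subseteq> FV i - {c}"
proof
  fix y assume y: "y \<in> {y\<in>R. y = z \<or> {z, y} \<in> E}"
  show "y \<in> FV i - {c}"
  proof (cases "y = z")
    case True then show ?thesis using y z c by blast
  next
    case False
    then have "{z, y} \<in> E" using y by blast
    then have "y \<in> FV i \<or> y = vv i" using pdec_NB1[OF P i z] by blast
    then show ?thesis using y v c by blast
  qed
qed

lemma pdec_cellcard:
  assumes P: "pdec q VF EF V E vv FV FE ww TE" and i: "i \<in> {1..q}" and c: "c \<in> FV i"
  shows "card (FV i - {c}) < card VF" "finite (FV i - {c})"
  using card_S1[OF pdec_FV(1)[OF P i] c] pdec_FV(2)[OF P i] pdec_FV(1)[OF P i] by simp_all

lemma B_pure: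
  assumes P: "pdec q VF EF V E vv FV FE ww TE" and A: "A \<subseteq> V" "A \<noteq> {}"
    and cE: "card E + 1 = q * (card EF + 2)"
  shows "(\<exists>D\<subseteq>V. card D + 1 \<le> q \<and> safe VF EF E (V - closed_nbhd V E D - A))
      \<or> (\<exists>vv' FV' FE' ww' TE'. pdec q VF EF V E vv' FV' FE' ww' TE' \<and> A \<subseteq> vv' ` {1..q})"
proof (cases "A \<subseteq> vv ` {1..q}")
  case True then show ?thesis using P by blast
next
  case False
  note PP = pdec_parts[OF P]
  define T where "T = vv ` {1..q}"
  have TV: "T \<subseteq> V" using PP(8) unfolding T_def by blast
  have finV: "finite V" using pdec_simple[OF P] by blast
  have cardT: "card T = q" unfolding T_def using PP(2) card_image by fastforce
  have wwE: "\<And>i. i \<in> {1..q} \<Longrightarrow> {vv i, ww i} \<in> E" using PP(9) by blast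
  have wwV: "\<And>i. i \<in> {1..q} \<Longrightarrow> ww i \<in> V" using PP(8) PP(6) by blast
  have ww: "\<And>i. i \<in> {1..q} \<Longrightarrow> ww i \<in> FV i" using PP(6) by blast
  have vvT: "\<And>i. i \<in> {1..q} \<Longrightarrow> vv i \<in> T" unfolding T_def by blast
  have vvinj: "\<And>i j. i \<in> {1..q} \<Longrightarrow> j \<in> {1..q} \<Longrightarrow> vv i = vv j \<Longrightarrow> i = j"
    using PP(2) unfolding inj_on_def by blast
  obtain a where a: "a \<in> A" "a \<notin> T" using False unfolding T_def by blast
  then obtain i0 where i0: "i0 \<in> {1..q}" "a \<in> FV i0" using pdec_cell[OF P] A(1) unfolding T_def by blast
  show ?thesis
  proof (cases "q \<ge> 2")
    case True
    define i1 where "i1 = (if i0 = 1 then 2 else (1::nat))"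
    have i1: "i1 \<in> {1..q}" "i1 \<noteq> i0" unfolding i1_def using True i0(1) by auto
    have "vv i1 \<noteq> vv i0" using vvinj[OF i1(1) i0(1)] i1(2) by blast
    then obtain t where t: "t \<in> T" "t \<noteq> vv i0" "{vv i0, t} \<in> TE"
      using tree_nbr[OF PP(7)] vvT[OF i0(1)] vvT[OF i1(1)] unfolding T_def by blast
    define D where "D = T - {vv i0}"
    have DV: "D \<subseteq> V" unfolding D_def using TV by blast
    have cardD: "card D + 1 \<le> q" unfolding D_def using cardT vvT[OF i0(1)] PP(1)
      by (simp add: card_Diff_singleton T_def)
    let ?R = "V - closed_nbhd V E D - A"
    have tE: "{t, vv i0} \<in> E" using t(3) PP(9) by (simp add: insert_commute)
    have v0N: "vv i0 \<notin> ?R"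
      using closed_nbhd_in[OF TV[THEN subsetD, OF vvT[OF i0(1)]] _ tE, of D] t unfolding D_def by blast
    have TN: "T \<inter> ?R = {}" using v0N closed_nbhd_D[of D V E] unfolding D_def by blast
    have "safe VF EF E ?R"
    proof (rule safe_sparse)
      show "finite ?R" using finV by blast
      show "\<forall>z\<in>?R. \<exists>S. finite S \<and> card S < card VF \<and> {y\<in>?R. y = z \<or> {z, y} \<in> E} \<subseteq> S"
      proof
        fix z assume z: "z \<in> ?R"
        then have "z \<notin> T" using TN by blast
        then obtain i where i: "i \<in> {1..q}" "z \<in> FV i" using pdec_cell[OF P] z unfolding T_def by blast
        have vN: "vv i \<notin> ?R" using TN vvT[OF i(1)] by blast
        show "\<exists>S. finite S \<and> card S < card VF \<and> {y\<in>?R. y = z \<or> {z, y} \<in> E} \<subseteq> S"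
        proof (cases "i = i0")
          case True
          have "a \<notin> ?R" using a by blast
          then show ?thesis using pdec_cellbound[OF P i(1) i(2), of a ?R] pdec_cellcard[OF P i(1), of a]
              vN i0 True by blast
        next
          case False
          have "vv i \<in> D" unfolding D_def using vvT[OF i(1)] vvinj[OF i(1) i0(1)] False by blast
          then have "ww i \<notin> ?R" using closed_nbhd_in[OF wwV[OF i(1)] _ wwE[OF i(1)], of D] by blast
          then show ?thesis using pdec_cellbound[OF P i(1) i(2) ww[OF i(1)], of ?R]
              pdec_cellcard[OF P i(1) ww[OF i(1)]] vN by blast
        qed
      qed
    qed
    then show ?thesis using DV cardD by blast
  next
    case False
    then have q1: "q = 1" using PP(1) by simp
    have i01: "i0 = 1" using i0(1) q1 by simp
    have Veq: "V = insert (vv 1) (FV 1)" using PP(8) q1 by simp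
    have v1: "vv 1 \<notin> FV 1" using pdec_vvFV[OF P, of 1 1] q1 by simp
    have fin1: "finite (FV 1)" and card1: "card (FV 1) = card VF" using pdec_FV[OF P, of 1] q1 by simp_all
    have cardV: "card V = card VF + 1" using Veq v1 fin1 card1 by simp
    show ?thesis
    proof (cases "safe VF EF E (V - A)")
      case True
      then have "safe VF EF E (V - closed_nbhd V E {} - A)" by simp
      then show ?thesis using q1 by (intro disjI1 exI[of _ "{}"]) simp
    next
      case False
      then obtain f where f: "inj_on f VF" "f ` VF \<subseteq> V - A" "\<forall>e\<in>EF. f ` e \<in> E"
        unfolding safe_def by blast
      have finA: "finite A" using A(1) finV finite_subset by blast
      have "card (f ` VF) \<le> card (V - A)" using f(2) finV by (simp add: card_mono)
      then have "card VF \<le> card V - card A" using card_image[OF f(1)] card_Diff_subset[OF finA A(1)] by simp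
      moreover have "card A \<le> card V" using finV A(1) by (simp add: card_mono)
      ultimately have "card A \<le> 1" using cardV by simp
      then have "\<forall>x\<in>A. \<forall>y\<in>A. x = y" using card_le_Suc0_iff_eq[OF finA] by simp
      then have Aa: "A = {a}" using a(1) by blast
      define R where "R = V - {a}"
      have "a \<in> V" using a(1) A(1) by blast
      then have cardR: "card R = card VF" unfolding R_def using cardV finV by (simp add: card_Diff_singleton)
      have fR: "f ` VF = R"
      proof (rule card_subset_eq)
        show "finite R" unfolding R_def using finV by blast
        show "f ` VF \<subseteq> R" using f(2) Aa unfolding R_def by blast
        show "card (f ` VF) = card R" using card_image[OF f(1)] cardR by simp
      qed
      define FEn where "FEn = (\<lambda>e. f ` e) ` EF"
      have bij: "bij_betw f VF R" using f(1) fR unfolding bij_betw_def by blast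
      have iso: "graph_iso VF EF R FEn" unfolding graph_iso_def FEn_def using bij by blast
      have cardFEn: "card FEn = card EF" using iso_card_E[OF iso] F_sg unfolding simple_graph_def by blast
      have FEnE: "FEn \<subseteq> {e\<in>E. a \<notin> e}"
      proof
        fix e' assume "e' \<in> FEn"
        then obtain e where e: "e \<in> EF" "e' = f ` e" unfolding FEn_def by blast
        then have "e \<subseteq> VF" using F_sg unfolding simple_graph_def by blast
        then have "e' \<subseteq> R" using e(2) fR by blast
        then show "e' \<in> {e\<in>E. a \<notin> e}" using f(3) e unfolding R_def by blast
      qed
      have sgE: "simple_graph V E" using pdec_simple[OF P] by blast
      have finE: "finite E"
      proof -
        have "E \<subseteq> Pow V" using sgE unfolding simple_graph_def by blast
        then show ?thesis using finV finite_subset by blast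
      qed
      obtain a' where a': "a' \<in> FV 1" "a' \<noteq> a" "{a, a'} \<in> FE 1"
        using iso_nbr[of EF "FV 1" "FE 1" a] PP(3) i0 i01 by blast
      have aE: "{a, a'} \<in> {e\<in>E. a \<in> e}" using a' PP(9) q1 by auto
      have splitE: "card E = card {e\<in>E. a \<in> e} + card {e\<in>E. a \<notin> e}"
      proof -
        have "E = {e\<in>E. a \<in> e} \<union> {e\<in>E. a \<notin> e}" by blast
        moreover have "card ({e\<in>E. a \<in> e} \<union> {e\<in>E. a \<notin> e}) = card {e\<in>E. a \<in> e} + card {e\<in>E. a \<notin> e}"
          by (rule card_Un_disjoint) (use finE in auto)
        ultimately show ?thesis by simp
      qed
      have cE1: "card E = card EF + 1" using cE q1 by simp
      have "card FEn \<le> card {e\<in>E. a \<notin> e}" using FEnE finE by (simp add: card_mono)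
      then have cEa: "card {e\<in>E. a \<in> e} \<le> 1" using splitE cE1 cardFEn by simp
      have "finite {e\<in>E. a \<in> e}" using finE by simp
      then have all: "\<forall>x\<in>{e\<in>E. a \<in> e}. \<forall>y\<in>{e\<in>E. a \<in> e}. x = y" using cEa card_le_Suc0_iff_eq[of "{e\<in>E. a \<in> e}"] by simp
      have "{e\<in>E. a \<in> e} = {{a, a'}}"
      proof
        show "{e\<in>E. a \<in> e} \<subseteq> {{a, a'}}"
        proof
          fix x assume x: "x \<in> {e\<in>E. a \<in> e}"
          have "x = {a, a'}" using bspec[OF bspec[OF all x] aE] .
          then show "x \<in> {{a, a'}}" by simp
        qed
        show "{{a, a'}} \<subseteq> {e\<in>E. a \<in> e}" using aE by simp
      qed
      have E'eq: "{e\<in>E. a \<notin> e} = FEn"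
      proof (rule card_subset_eq[symmetric])
        show "finite {e\<in>E. a \<notin> e}" using finE by simp
        show "FEn \<subseteq> {e\<in>E. a \<notin> e}" by (rule FEnE)
        show "card FEn = card {e\<in>E. a \<notin> e}"
          using splitE cE1 cardFEn \<open>{e\<in>E. a \<in> e} = {{a, a'}}\<close> by simp
      qed
      have Eeq: "E = insert {a, a'} FEn"
      proof -
        have "E = {e\<in>E. a \<in> e} \<union> {e\<in>E. a \<notin> e}" by blast
        then show ?thesis using E'eq \<open>{e\<in>E. a \<in> e} = {{a, a'}}\<close> by simp
      qed
      have a'R: "a' \<in> R" unfolding R_def using a' Veq by blast
      have aR: "a \<notin> R" unfolding R_def by blast
      have VaR: "V = insert a R" unfolding R_def using a(1) A(1) by blast
      have tr: "tree_graph ((\<lambda>_. a) ` {1..1::nat}) {}"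
        unfolding tree_graph_def simple_graph_def connected_graph_def by simp
      have "pdec 1 VF EF V E (\<lambda>_. a) (\<lambda>_. R) (\<lambda>_. FEn) (\<lambda>_. a') {}"
        unfolding pdec_def
      proof (intro conjI)
        show "inj_on (\<lambda>_. a) {1..1::nat}" by simp
        show "\<forall>i\<in>{1..1::nat}. graph_iso VF EF R FEn" using iso by blast
        show "\<forall>i\<in>{1..1::nat}. R \<inter> (\<lambda>_. a) ` {1..1::nat} = {}" using aR by simp
        show "\<forall>i\<in>{1..1::nat}. a' \<in> R" using a'R by blast
        show "V = (\<Union>i\<in>{1..1::nat}. insert a R)" using VaR by simp
        show "E = {} \<union> (\<Union>i\<in>{1..1::nat}. insert {a, a'} FEn)" using Eeq by simp
      qed (use tr in auto)
      moreover have "A \<subseteq> (\<lambda>_. a) ` {1..1::nat}" using Aa by simp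
      ultimately show ?thesis using q1 by blast
    qed
  qed
qed


lemma copy_facts:
  assumes "copy_F_plus_e VF EF V E"
  shows "finite V" "card V = card VF" "card E = card EF + 1" "simple_graph V E"
    "\<forall>y\<in>V. \<exists>y'\<in>V. y' \<noteq> y \<and> {y, y'} \<in> E"
proof -
  obtain e where e: "e \<subseteq> VF" "card e = 2" "e \<notin> EF" "graph_iso VF (insert e EF) V E"
    using assms unfolding copy_F_plus_e_def by blast
  have ed: "\<forall>e'\<in>insert e EF. e' \<subseteq> VF \<and> card e' = 2" using e EF_edges by blast
  show fV: "finite V" "card V = card VF" using iso_props[OF e(4) ed] by blast+
  have "insert e EF \<subseteq> Pow VF" using ed by blast
  then show "card E = card EF + 1" using iso_card_E[OF e(4)] e(3) finEF by simp
  have "\<forall>e'\<in>E. e' \<subseteq> V \<and> card e' = 2" using iso_props[OF e(4) ed] by blast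
  then show "simple_graph V E" using fV unfolding simple_graph_def by blast
  show "\<forall>y\<in>V. \<exists>y'\<in>V. y' \<noteq> y \<and> {y, y'} \<in> E"
    using iso_nbr[OF e(4)] by blast
qed

lemma A_copy:
  assumes C: "copy_F_plus_e VF EF V E" and y: "y \<in> V"
  shows "\<exists>D\<subseteq>V. y \<in> D \<and> card D \<le> 1 \<and> safe VF EF E (V - closed_nbhd V E D)"
proof -
  note CC = copy_facts[OF C]
  obtain y' where y': "y' \<in> V" "y' \<noteq> y" "{y, y'} \<in> E" using CC(5) y by blast
  have sub: "V - closed_nbhd V E {y} \<subseteq> V - {y, y'}"
    using closed_nbhd_in[OF y'(1) _ y'(3), of "{y}"] closed_nbhd_D[of "{y}" V E] by blast
  have "card (V - {y, y'}) = card V - 2" using CC(1) y y' by (simp add: card_Diff_subset)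
  moreover have "card V \<ge> 2" using CC(1) y y' card_mono[of V "{y, y'}"] by simp
  ultimately have "card (V - {y, y'}) < card VF" using CC(2) by simp
  then have "safe VF EF E (V - {y, y'})" using safe_small CC(1) by blast
  then have "safe VF EF E (V - closed_nbhd V E {y})" using safe_mono sub by blast
  then show ?thesis using y by (intro exI[of _ "{y}"]) simp
qed

lemma B_copy:
  assumes C: "copy_F_plus_e VF EF V E" and A: "A \<subseteq> V" "A \<noteq> {}"
  shows "safe VF EF E (V - closed_nbhd V E {} - A)"
proof -
  note CC = copy_facts[OF C]
  have fA: "finite A" using A(1) CC(1) finite_subset by blast
  then have "card A \<ge> 1" using A(2) by (simp add: Suc_leI card_gt_0_iff)
  moreover have "card (V - A) = card V - card A" using fA A(1) by (simp add: card_Diff_subset)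
  moreover have "card A \<le> card V" using CC(1) A(1) card_mono by blast
  moreover have "card V \<ge> 1" using \<open>card A \<ge> 1\<close> \<open>card A \<le> card V\<close> by simp
  ultimately have "card (V - A) < card VF" using CC(2) by simp
  then have "safe VF EF E (V - A)" using safe_small[of "V - A"] CC(1) by blast
  then show ?thesis by simp
qed

end

lemma merge:
  fixes vv :: "nat \<Rightarrow> nat \<Rightarrow> 'a" and FV :: "nat \<Rightarrow> nat \<Rightarrow> 'a set"
    and FE :: "nat \<Rightarrow> nat \<Rightarrow> 'a set set" and ww :: "nat \<Rightarrow> nat \<Rightarrow> 'a"
    and TE :: "nat \<Rightarrow> 'a set set" and VG :: "nat \<Rightarrow> 'a set" and EG :: "nat \<Rightarrow> 'a set set"
    and VF :: "'b set"
  assumes s: "s \<ge> 1"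
    and P: "\<forall>j\<in>{1..s}. pdec (q j) VF EF (VG j) (EG j) (vv j) (FV j) (FE j) (ww j) (TE j)"
    and disj: "\<forall>i\<in>{1..s}. \<forall>j\<in>{1..s}. i \<noteq> j \<longrightarrow> VG i \<inter> VG j = {}"
    and conn: "\<forall>j\<in>{2..s}. v j \<in> vv 1 ` {1..q 1} \<and> w j \<in> vv j ` {1..q j}"
  shows "special_constr (\<Sum>j\<in>{1..s}. q j) 0 VF EF (\<Union>j\<in>{1..s}. VG j)
           ((\<Union>j\<in>{1..s}. EG j) \<union> {{v j, w j} | j. j \<in> {2..s}})"
proof -
  define Q where "Q = (\<Sum>j\<in>{1..s}. q j)"
  define S where "S = Sigma {1..s} (\<lambda>j. {1..q j})"
  define C where "C = {{v j, w j} | j. j \<in> {2..s}}"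
  have finS: "finite S" unfolding S_def by simp
  have cardS: "card S = Q" unfolding S_def Q_def by (simp add: card_SigmaI)
  obtain g where g: "bij_betw g {1..Q} S"
    using finite_same_card_bij[of "{1..Q}" S] finS cardS by auto
  have gS: "\<And>t. t \<in> {1..Q} \<Longrightarrow> g t \<in> S" using g unfolding bij_betw_def by blast
  have gimg: "g ` {1..Q} = S" using g unfolding bij_betw_def by blast
  have ginj: "\<And>t1 t2. t1 \<in> {1..Q} \<Longrightarrow> t2 \<in> {1..Q} \<Longrightarrow> g t1 = g t2 \<Longrightarrow> t1 = t2"
    using g unfolding bij_betw_def inj_on_def by blast
  have Pj: "\<And>j. j \<in> {1..s} \<Longrightarrow> pdec (q j) VF EF (VG j) (EG j) (vv j) (FV j) (FE j) (ww j) (TE j)"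
    using P by blast
  note PP = pdec_parts[OF Pj]
  have same: "\<And>x j1 j2. j1 \<in> {1..s} \<Longrightarrow> j2 \<in> {1..s} \<Longrightarrow> x \<in> VG j1 \<Longrightarrow> x \<in> VG j2 \<Longrightarrow> j1 = j2"
    using disj by blast
  have vvG: "\<And>j i. j \<in> {1..s} \<Longrightarrow> i \<in> {1..q j} \<Longrightarrow> vv j i \<in> VG j"
  proof -
    fix j i assume "j \<in> {1..s}" "i \<in> {1..q j}"
    then show "vv j i \<in> VG j" using PP(8)[of j] by blast
  qed
  have FVG: "\<And>j i. j \<in> {1..s} \<Longrightarrow> i \<in> {1..q j} \<Longrightarrow> FV j i \<subseteq> VG j"
  proof -
    fix j i assume "j \<in> {1..s}" "i \<in> {1..q j}"
    then show "FV j i \<subseteq> VG j" using PP(8)[of j] by blast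
  qed
  have Tsub: "\<And>j. j \<in> {1..s} \<Longrightarrow> vv j ` {1..q j} \<subseteq> VG j" using vvG by blast
  have TEsub: "\<And>j e. j \<in> {1..s} \<Longrightarrow> e \<in> TE j \<Longrightarrow> e \<subseteq> vv j ` {1..q j} \<and> card e = 2"
  proof -
    fix j e assume j: "j \<in> {1..s}" and e: "e \<in> TE j"
    have "tree_graph (vv j ` {1..q j}) (TE j)" using PP(7)[OF j] .
    then show "e \<subseteq> vv j ` {1..q j} \<and> card e = 2" using e unfolding tree_graph_def simple_graph_def by blast
  qed
  define vv' where "vv' t = vv (fst (g t)) (snd (g t))" for t
  define FV' where "FV' t = FV (fst (g t)) (snd (g t))" for t
  define FE' where "FE' t = FE (fst (g t)) (snd (g t))" for t
  define ww' where "ww' t = ww (fst (g t)) (snd (g t))" for t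
  define TE' where "TE' = (\<Union>j\<in>{1..s}. TE j) \<union> C"
  have Sdest: "\<And>p. p \<in> S \<Longrightarrow> fst p \<in> {1..s} \<and> snd p \<in> {1..q (fst p)}" unfolding S_def by auto
  have reidx: "\<And>h. (\<Union>t\<in>{1..Q}. h (g t)) = (\<Union>p\<in>S. h p)"
    using gimg by auto
  have sig: "\<And>h. (\<Union>p\<in>S. h p) = (\<Union>j\<in>{1..s}. \<Union>i\<in>{1..q j}. h (j, i))"
    unfolding S_def by auto
  define TT where "TT = (\<Union>j\<in>{1..s}. vv j ` {1..q j})"
  have TTeq: "vv' ` {1..Q} = TT"
  proof -
    have "vv' ` {1..Q} = (\<Union>t\<in>{1..Q}. {vv (fst (g t)) (snd (g t))})" unfolding vv'_def by auto
    also have "\<dots> = (\<Union>p\<in>S. {vv (fst p) (snd p)})" using reidx[of "\<lambda>p. {vv (fst p) (snd p)}"] by simp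
    also have "\<dots> = TT" unfolding TT_def using sig[of "\<lambda>p. {vv (fst p) (snd p)}"] by auto
    finally show ?thesis .
  qed
  have inj': "inj_on vv' {1..Q}"
  proof (rule inj_onI)
    fix t1 t2 assume t: "t1 \<in> {1..Q}" "t2 \<in> {1..Q}" and eq: "vv' t1 = vv' t2"
    obtain j1 i1 where p1: "g t1 = (j1, i1)" "j1 \<in> {1..s}" "i1 \<in> {1..q j1}"
      using Sdest[OF gS[OF t(1)]] by (metis prod.collapse)
    obtain j2 i2 where p2: "g t2 = (j2, i2)" "j2 \<in> {1..s}" "i2 \<in> {1..q j2}"
      using Sdest[OF gS[OF t(2)]] by (metis prod.collapse)
    have e: "vv j1 i1 = vv j2 i2" using eq p1 p2 unfolding vv'_def by simp
    then have "j1 = j2" using same[OF p1(2) p2(2)] vvG[OF p1(2,3)] vvG[OF p2(2,3)] by metis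
    then have "i1 = i2" using PP(2)[OF p1(2)] e p1(3) p2(3) unfolding inj_on_def by blast
    then have "g t1 = g t2" using p1 p2 \<open>j1 = j2\<close> by simp
    then show "t1 = t2" using ginj t by blast
  qed
  have cardTT: "card TT = Q" using TTeq card_image[OF inj'] by simp
  have vwne: "\<And>j. j \<in> {2..s} \<Longrightarrow> v j \<noteq> w j \<and> v j \<in> VG 1 \<and> w j \<in> VG j"
  proof -
    fix j assume j: "j \<in> {2..s}"
    have j1: "j \<in> {1..s}" "(1::nat) \<in> {1..s}" using j s by auto
    have "v j \<in> VG 1" "w j \<in> VG j" using conn j Tsub[OF j1(2)] Tsub[OF j1(1)] by blast+
    moreover have "j \<noteq> 1" using j by simp
    ultimately show "v j \<noteq> w j \<and> v j \<in> VG 1 \<and> w j \<in> VG j" using same[OF j1(2) j1(1)] by metis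
  qed
  have Csimple: "\<forall>e\<in>C. e \<subseteq> TT \<and> card e = 2"
  proof
    fix e assume "e \<in> C"
    then obtain j where j: "j \<in> {2..s}" "e = {v j, w j}" unfolding C_def by blast
    have j1: "j \<in> {1..s}" "(1::nat) \<in> {1..s}" using j s by auto
    have "v j \<in> TT" "w j \<in> TT" using conn j j1 unfolding TT_def by blast+
    then show "e \<subseteq> TT \<and> card e = 2" using vwne[OF j(1)] j(2) by simp
  qed
  have finTT: "finite TT" unfolding TT_def by simp
  have "\<forall>e\<in>TE'. e \<subseteq> TT \<and> card e = 2"
  proof
    fix e assume "e \<in> TE'"
    then consider "e \<in> C" | j where "j \<in> {1..s}" "e \<in> TE j" unfolding TE'_def by blast
    then show "e \<subseteq> TT \<and> card e = 2"
    proof cases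
      case 1 then show ?thesis using Csimple by blast
    next
      case (2 j)
      have "vv j ` {1..q j} \<subseteq> TT" unfolding TT_def using 2(1) by blast
      then show ?thesis using TEsub[OF 2] by blast
    qed
  qed
  then have sgT: "simple_graph TT TE'" unfolding simple_graph_def using finTT by blast
  define b0 where "b0 = vv 1 1"
  have s1: "(1::nat) \<in> {1..s}" using s by simp
  have q11: "(1::nat) \<in> {1..q 1}" using PP(1)[OF s1] by simp
  have b0T: "b0 \<in> vv 1 ` {1..q 1}" unfolding b0_def using q11 by blast
  have treej: "\<And>j. j \<in> {1..s} \<Longrightarrow> tree_graph (vv j ` {1..q j}) (TE j)" using PP(7) by blast
  have connj: "\<And>j x y. j \<in> {1..s} \<Longrightarrow> x \<in> vv j ` {1..q j} \<Longrightarrow> y \<in> vv j ` {1..q j} \<Longrightarrow>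
      (x, y) \<in> (adj_rel TE')\<^sup>*"
  proof -
    fix j x y assume j: "j \<in> {1..s}" and xy: "x \<in> vv j ` {1..q j}" "y \<in> vv j ` {1..q j}"
    have 1: "(x, y) \<in> (adj_rel (TE j))\<^sup>*" using treej[OF j] xy unfolding tree_graph_def connected_graph_def by blast
    have 2: "TE j \<subseteq> TE'" unfolding TE'_def using j by blast
    show "(x, y) \<in> (adj_rel TE')\<^sup>*" by (rule adj_mono[OF 2 1])
  qed
  have reach: "\<And>x. x \<in> TT \<Longrightarrow> (x, b0) \<in> (adj_rel TE')\<^sup>*"
  proof -
    fix x assume "x \<in> TT"
    then obtain j where j: "j \<in> {1..s}" "x \<in> vv j ` {1..q j}" unfolding TT_def by blast
    show "(x, b0) \<in> (adj_rel TE')\<^sup>*"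
    proof (cases "j = 1")
      case True then show ?thesis using connj[OF s1 _ b0T] j by simp
    next
      case False
      then have j2: "j \<in> {2..s}" using j(1) by simp
      have wT: "w j \<in> vv j ` {1..q j}" using conn j2 by blast
      have vT: "v j \<in> vv 1 ` {1..q 1}" using conn j2 by blast
      have r1: "(x, w j) \<in> (adj_rel TE')\<^sup>*" using connj[OF j(1) j(2) wT] .
      have "{v j, w j} \<in> TE'" unfolding TE'_def C_def using j2 by blast
      then have r2: "(w j, v j) \<in> adj_rel TE'" unfolding adj_rel_def by (simp add: insert_commute)
      have r3: "(v j, b0) \<in> (adj_rel TE')\<^sup>*" using connj[OF s1 vT b0T] .
      show ?thesis using rtrancl_trans[OF rtrancl_into_rtrancl[OF r1 r2] r3] .
    qed
  qed
  have conT: "connected_graph TT TE'"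
    unfolding connected_graph_def
  proof (intro conjI ballI)
    show "TT \<noteq> {}" using b0T s1 unfolding TT_def by blast
    fix x y assume "x \<in> TT" "y \<in> TT"
    then show "(x, y) \<in> (adj_rel TE')\<^sup>*" using rtrancl_trans[OF reach adj_sym[OF reach]] by blast
  qed
  have finTE: "\<And>j. j \<in> {1..s} \<Longrightarrow> finite (TE j)"
  proof -
    fix j assume j: "j \<in> {1..s}"
    have "TE j \<subseteq> Pow (vv j ` {1..q j})" using TEsub[OF j] by blast
    then show "finite (TE j)" by (meson finite_Pow_iff finite_atLeastAtMost finite_imageI finite_subset)
  qed
  have cardUT: "card (\<Union>j\<in>{1..s}. TE j) = (\<Sum>j\<in>{1..s}. card (TE j))"
  proof (rule card_UN_disjoint)
    show "finite {1..s}" by simp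
    show "\<forall>i\<in>{1..s}. finite (TE i)" using finTE by blast
    show "\<forall>i\<in>{1..s}. \<forall>j\<in>{1..s}. i \<noteq> j \<longrightarrow> TE i \<inter> TE j = {}"
    proof (intro ballI impI)
      fix i j assume ij: "i \<in> {1..s}" "j \<in> {1..s}" "i \<noteq> j"
      show "TE i \<inter> TE j = {}"
      proof (rule ccontr)
        assume "TE i \<inter> TE j \<noteq> {}"
        then obtain e where e: "e \<in> TE i" "e \<in> TE j" by blast
        then have "card e = 2" using TEsub[OF ij(1)] by blast
        then obtain x where "x \<in> e" by (metis card.empty ex_in_conv zero_neq_numeral)
        then have "x \<in> VG i" "x \<in> VG j" using TEsub[OF ij(1) e(1)] TEsub[OF ij(2) e(2)] Tsub[OF ij(1)] Tsub[OF ij(2)] by blast+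
        then show False using same[OF ij(1) ij(2)] ij(3) by blast
      qed
    qed
  qed
  have Cimg: "C = (\<lambda>j. {v j, w j}) ` {2..s}" unfolding C_def by blast
  have cardC: "card C = s - 1"
  proof -
    have "inj_on (\<lambda>j. {v j, w j}) {2..s}"
    proof (rule inj_onI)
      fix j1 j2 assume j: "j1 \<in> {2..s}" "j2 \<in> {2..s}" and eq: "{v j1, w j1} = {v j2, w j2}"
      have jj: "j1 \<in> {1..s}" "j2 \<in> {1..s}" using j by auto
      have "w j1 \<in> {v j2, w j2}" using eq by blast
      moreover have "w j1 \<noteq> v j2"
      proof
        assume "w j1 = v j2"
        then have "w j1 \<in> VG 1" using vwne[OF j(2)] by simp
        then show False using same[OF jj(1) s1] vwne[OF j(1)] j(1) by auto
      qed
      ultimately have "w j1 = w j2" by blast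
      then show "j1 = j2" using same[OF jj] vwne[OF j(1)] vwne[OF j(2)] by metis
    qed
    then show ?thesis unfolding Cimg by (simp add: card_image)
  qed
  have disjC: "(\<Union>j\<in>{1..s}. TE j) \<inter> C = {}"
  proof (rule ccontr)
    assume "(\<Union>j\<in>{1..s}. TE j) \<inter> C \<noteq> {}"
    then obtain j j' where j: "j \<in> {1..s}" "j' \<in> {2..s}" "{v j', w j'} \<in> TE j" unfolding C_def by blast
    have jj: "j' \<in> {1..s}" using j(2) by auto
    have "v j' \<in> VG j" "w j' \<in> VG j" using TEsub[OF j(1) j(3)] Tsub[OF j(1)] by blast+
    then have "j = 1" "j = j'" using same[OF j(1) s1] same[OF j(1) jj] vwne[OF j(2)] by blast+
    then show False using j(2) by simp
  qed
  have finC: "finite C" unfolding Cimg by simp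
  have cardTE': "card TE' = (\<Sum>j\<in>{1..s}. card (TE j)) + (s - 1)"
    unfolding TE'_def using card_Un_disjoint[OF _ finC disjC] finTE cardUT cardC by simp
  have ctj: "\<And>j. j \<in> {1..s} \<Longrightarrow> card (TE j) + 1 = q j"
  proof -
    fix j assume j: "j \<in> {1..s}"
    have "card (vv j ` {1..q j}) = q j" using PP(2)[OF j] card_image by fastforce
    then show "card (TE j) + 1 = q j" using treej[OF j] unfolding tree_graph_def by simp
  qed
  have "(\<Sum>j\<in>{1..s}. card (TE j) + 1) = Q" unfolding Q_def using ctj by simp
  moreover have "(\<Sum>j\<in>{1..s}. card (TE j) + 1) = (\<Sum>j\<in>{1..s}. card (TE j)) + s"
    unfolding sum.distrib by simp
  ultimately have "(\<Sum>j\<in>{1..s}. card (TE j)) + s = Q" by simp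
  then have cT: "card TE' + 1 = card TT" using cardTE' cardTT s by simp
  have treeT: "tree_graph (vv' ` {1..Q}) TE'" unfolding tree_graph_def TTeq using sgT conT cT by blast
  have Veq: "(\<Union>j\<in>{1..s}. VG j) = (\<Union>t\<in>{1..Q}. insert (vv' t) (FV' t))"
  proof -
    have "(\<Union>t\<in>{1..Q}. insert (vv' t) (FV' t)) = (\<Union>p\<in>S. insert (vv (fst p) (snd p)) (FV (fst p) (snd p)))"
      unfolding vv'_def FV'_def using reidx[of "\<lambda>p. insert (vv (fst p) (snd p)) (FV (fst p) (snd p))"] by simp
    also have "\<dots> = (\<Union>j\<in>{1..s}. \<Union>i\<in>{1..q j}. insert (vv j i) (FV j i))"
      using sig[of "\<lambda>p. insert (vv (fst p) (snd p)) (FV (fst p) (snd p))"] by simp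
    also have "\<dots> = (\<Union>j\<in>{1..s}. VG j)" using PP(8) by simp
    finally show ?thesis by simp
  qed
  have Eeq: "(\<Union>j\<in>{1..s}. EG j) \<union> C = TE' \<union> (\<Union>t\<in>{1..Q}. insert {vv' t, ww' t} (FE' t))"
  proof -
    have "(\<Union>t\<in>{1..Q}. insert {vv' t, ww' t} (FE' t)) = (\<Union>p\<in>S. insert {vv (fst p) (snd p), ww (fst p) (snd p)} (FE (fst p) (snd p)))"
      unfolding vv'_def ww'_def FE'_def using reidx[of "\<lambda>p. insert {vv (fst p) (snd p), ww (fst p) (snd p)} (FE (fst p) (snd p))"] by simp
    also have "\<dots> = (\<Union>j\<in>{1..s}. \<Union>i\<in>{1..q j}. insert {vv j i, ww j i} (FE j i))"
      using sig[of "\<lambda>p. insert {vv (fst p) (snd p), ww (fst p) (snd p)} (FE (fst p) (snd p))"] by simp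
    finally have a: "(\<Union>t\<in>{1..Q}. insert {vv' t, ww' t} (FE' t)) = (\<Union>j\<in>{1..s}. \<Union>i\<in>{1..q j}. insert {vv j i, ww j i} (FE j i))" .
    have "(\<Union>j\<in>{1..s}. EG j) = (\<Union>j\<in>{1..s}. TE j \<union> (\<Union>i\<in>{1..q j}. insert {vv j i, ww j i} (FE j i)))"
      using PP(9) by simp
    also have "\<dots> = (\<Union>j\<in>{1..s}. TE j) \<union> (\<Union>j\<in>{1..s}. \<Union>i\<in>{1..q j}. insert {vv j i, ww j i} (FE j i))"
      by (rule UN_Un_distrib)
    finally show ?thesis unfolding TE'_def a by (simp add: Un_ac)
  qed
  have pd: "pdec Q VF EF (\<Union>j\<in>{1..s}. VG j) ((\<Union>j\<in>{1..s}. EG j) \<union> C) vv' FV' FE' ww' TE'"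
    unfolding pdec_def
  proof (intro conjI)
    show "1 \<le> Q" unfolding Q_def using PP(1)[OF s1] s1
      by (metis finite_atLeastAtMost member_le_sum zero_le order_trans)
    show "inj_on vv' {1..Q}" by (rule inj')
    show "\<forall>i\<in>{1..Q}. graph_iso VF EF (FV' i) (FE' i)"
    proof
      fix t assume t: "t \<in> {1..Q}"
      then show "graph_iso VF EF (FV' t) (FE' t)" using Sdest[OF gS[OF t]] PP(3) unfolding FV'_def FE'_def by blast
    qed
    show "\<forall>i\<in>{1..Q}. \<forall>j\<in>{1..Q}. i \<noteq> j \<longrightarrow> FV' i \<inter> FV' j = {}"
    proof (intro ballI impI)
      fix t1 t2 assume t: "t1 \<in> {1..Q}" "t2 \<in> {1..Q}" "t1 \<noteq> t2"
      obtain j1 i1 where p1: "g t1 = (j1, i1)" "j1 \<in> {1..s}" "i1 \<in> {1..q j1}"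
        using Sdest[OF gS[OF t(1)]] by (metis prod.collapse)
      obtain j2 i2 where p2: "g t2 = (j2, i2)" "j2 \<in> {1..s}" "i2 \<in> {1..q j2}"
        using Sdest[OF gS[OF t(2)]] by (metis prod.collapse)
      have ne: "(j1, i1) \<noteq> (j2, i2)" using ginj t p1(1) p2(1) by metis
      show "FV' t1 \<inter> FV' t2 = {}"
      proof (cases "j1 = j2")
        case True
        then have "i1 \<noteq> i2" using ne by simp
        then show ?thesis using PP(4)[OF p1(2)] p1 p2 True unfolding FV'_def by simp
      next
        case False
        have "VG j1 \<inter> VG j2 = {}" using disj p1(2) p2(2) False by blast
        then show ?thesis using FVG[OF p1(2,3)] FVG[OF p2(2,3)] p1(1) p2(1) unfolding FV'_def by auto
      qed
    qed
    show "\<forall>i\<in>{1..Q}. FV' i \<inter> vv' ` {1..Q} = {}"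
    proof
      fix t assume t: "t \<in> {1..Q}"
      obtain j1 i1 where p1: "g t = (j1, i1)" "j1 \<in> {1..s}" "i1 \<in> {1..q j1}"
        using Sdest[OF gS[OF t]] by (metis prod.collapse)
      show "FV' t \<inter> vv' ` {1..Q} = {}"
      proof (rule ccontr)
        assume "FV' t \<inter> vv' ` {1..Q} \<noteq> {}"
        then obtain x where x: "x \<in> FV j1 i1" "x \<in> TT" using TTeq p1(1) unfolding FV'_def by auto
        then obtain j where j: "j \<in> {1..s}" "x \<in> vv j ` {1..q j}" unfolding TT_def by blast
        have "j = j1" using same[OF j(1) p1(2)] Tsub[OF j(1)] j(2) FVG[OF p1(2,3)] x(1) by blast
        then show False using PP(5)[OF p1(2)] p1(3) x(1) j(2) by blast
      qed
    qed
    show "\<forall>i\<in>{1..Q}. ww' i \<in> FV' i"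
    proof
      fix t assume t: "t \<in> {1..Q}"
      then show "ww' t \<in> FV' t" using Sdest[OF gS[OF t]] PP(6) unfolding FV'_def ww'_def by blast
    qed
    show "tree_graph (vv' ` {1..Q}) TE'" by (rule treeT)
    show "(\<Union>j\<in>{1..s}. VG j) = (\<Union>i\<in>{1..Q}. insert (vv' i) (FV' i))" by (rule Veq)
    show "(\<Union>j\<in>{1..s}. EG j) \<union> C = TE' \<union> (\<Union>i\<in>{1..Q}. insert {vv' i, ww' i} (FE' i))" by (rule Eeq)
  qed
  show ?thesis using pdec_to_sc[OF pd] unfolding Q_def C_def .
qed


lemma closed_nbhd_mono:
  "X \<subseteq> D \<Longrightarrow> W \<subseteq> V \<Longrightarrow> F \<subseteq> E \<Longrightarrow> closed_nbhd W F X \<subseteq> closed_nbhd V E D"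
  unfolding closed_nbhd_def by blast

lemma cardC_lemma:
  fixes v w :: "nat \<Rightarrow> 'a"
  assumes disj: "\<forall>i\<in>{1..s}. \<forall>j\<in>{1..s}. i \<noteq> j \<longrightarrow> VG i \<inter> VG j = {}"
    and vw: "\<forall>j\<in>{2..s}. v j \<in> VG 1 \<and> w j \<in> VG j"
  shows "card {{v j, w j} | j. j \<in> {2..s}} = s - 1"
proof -
  have Cimg: "{{v j, w j} | j. j \<in> {2..s}} = (\<lambda>j. {v j, w j}) ` {2..s}" by blast
  have "inj_on (\<lambda>j. {v j, w j}) {2..s}"
  proof (rule inj_onI)
    fix j1 j2 assume j: "j1 \<in> {2..s}" "j2 \<in> {2..s}" and eq: "{v j1, w j1} = {v j2, w j2}"
    have jj: "j1 \<in> {1..s}" "j2 \<in> {1..s}" "(1::nat) \<in> {1..s}" using j by auto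
    have w1: "w j1 \<in> VG j1" "v j2 \<in> VG 1" "w j2 \<in> VG j2" using vw j by blast+
    have "w j1 \<in> {v j2, w j2}" using eq by blast
    moreover have "w j1 \<noteq> v j2"
    proof
      assume "w j1 = v j2"
      then have "w j1 \<in> VG j1 \<inter> VG 1" using w1 by simp
      moreover have "j1 \<noteq> 1" using j by simp
      ultimately show False using disj jj(1) jj(3) by blast
    qed
    ultimately have "w j1 = w j2" by blast
    then have "w j1 \<in> VG j1 \<inter> VG j2" using w1 by simp
    then show "j1 = j2" using disj jj(1) jj(2) by blast
  qed
  then show ?thesis unfolding Cimg by (simp add: card_image)
qed

context Fctx begin

lemma combine:
  fixes VG :: "nat \<Rightarrow> 'a set" and EG :: "nat \<Rightarrow> 'a set set" and v w :: "nat \<Rightarrow> 'a"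
  assumes disj: "\<forall>i\<in>{1..s}. \<forall>j\<in>{1..s}. i \<noteq> j \<longrightarrow> VG i \<inter> VG j = {}"
    and sg: "\<forall>j\<in>{1..s}. simple_graph (VG j) (EG j)"
    and Veq: "V = (\<Union>j\<in>{1..s}. VG j)"
    and Eeq: "E = (\<Union>j\<in>{1..s}. EG j) \<union> {{v j, w j} | j. j \<in> {2..s}}"
    and DV: "D \<subseteq> V"
    and R: "\<forall>j\<in>{1..s}. safe VF EF (EG j) (R j) \<and> VG j - closed_nbhd V E D \<subseteq> R j"
    and cut: "\<forall>j\<in>{2..s}. v j \<in> closed_nbhd V E D"
  shows "isolating_set V E VF EF D"
proof -
  define U where "U = V - closed_nbhd V E D"
  have "\<not> has_subgraph U {e\<in>E. e \<subseteq> U} VF EF"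
  proof
    assume "has_subgraph U {e\<in>E. e \<subseteq> U} VF EF"
    then obtain f where f: "inj_on f VF" "f ` VF \<subseteq> U" "\<forall>e\<in>EF. f ` e \<in> {e\<in>E. e \<subseteq> U}"
      unfolding has_subgraph_def by blast
    have inEG: "\<And>e. e \<in> E \<Longrightarrow> e \<subseteq> U \<Longrightarrow> \<exists>j\<in>{1..s}. e \<in> EG j"
    proof -
      fix e assume e: "e \<in> E" "e \<subseteq> U"
      show "\<exists>j\<in>{1..s}. e \<in> EG j"
      proof (rule ccontr)
        assume "\<not> (\<exists>j\<in>{1..s}. e \<in> EG j)"
        then have "e \<in> {{v j, w j} | j. j \<in> {2..s}}" using e(1) Eeq by blast
        then obtain j where "j \<in> {2..s}" "e = {v j, w j}" by blast
        then have "v j \<in> U" using e(2) by blast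
        then show False using cut \<open>j \<in> {2..s}\<close> unfolding U_def by blast
      qed
    qed
    have EGsub: "\<And>j e. j \<in> {1..s} \<Longrightarrow> e \<in> EG j \<Longrightarrow> e \<subseteq> VG j"
      using sg unfolding simple_graph_def by blast
    have same: "\<And>x j1 j2. j1 \<in> {1..s} \<Longrightarrow> j2 \<in> {1..s} \<Longrightarrow> x \<in> VG j1 \<Longrightarrow> x \<in> VG j2 \<Longrightarrow> j1 = j2"
      using disj by blast
    have fu: "f uF \<in> U" using f(2) uF by blast
    then obtain j where j: "j \<in> {1..s}" "f uF \<in> VG j" unfolding U_def Veq by blast
    have fVG: "f ` VF \<subseteq> VG j"
    proof
      fix y assume "y \<in> f ` VF"
      then obtain x where x: "x \<in> VF" "y = f x" by blast
      show "y \<in> VG j"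
      proof (cases "x = uF")
        case True then show ?thesis using x j by simp
      next
        case False
        then have "{uF, x} \<in> EF" using uF_dom x by blast
        then have "f ` {uF, x} \<in> E" "f ` {uF, x} \<subseteq> U" using f(3) by blast+
        then obtain j' where j': "j' \<in> {1..s}" "f ` {uF, x} \<in> EG j'" using inEG by blast
        then have sub: "f ` {uF, x} \<subseteq> VG j'" using EGsub by blast
        then have "f uF \<in> VG j'" by simp
        then have "j' = j" using same[OF j'(1) j(1)] j(2) by blast
        then show ?thesis using sub x by simp
      qed
    qed
    have "f ` VF \<subseteq> R j" using fVG f(2) R j(1) unfolding U_def by blast
    moreover have "\<forall>e\<in>EF. f ` e \<in> EG j"
    proof
      fix e assume e: "e \<in> EF"
      then have fe: "f ` e \<in> E" "f ` e \<subseteq> U" using f(3) by blast+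
      then obtain j' where j': "j' \<in> {1..s}" "f ` e \<in> EG j'" using inEG by blast
      have "e \<subseteq> VF" "card e = 2" using e EF_edges by blast+
      then obtain x where x: "x \<in> e" by (metis card.empty ex_in_conv zero_neq_numeral)
      have "f x \<in> VG j" using fVG x \<open>e \<subseteq> VF\<close> by blast
      moreover have "f x \<in> VG j'" using EGsub[OF j'] x by blast
      ultimately have "j' = j" using same[OF j'(1) j(1)] by simp
      then show "f ` e \<in> EG j" using j' by simp
    qed
    ultimately show False using R j(1) f(1) unfolding safe_def by blast
  qed
  then show ?thesis unfolding isolating_set_def U_def Let_def using DV by blast
qed

end

theorem lemma3p7:
  fixes VF :: "'b set" and EF :: "'b set set" and k s :: nat
    and VG :: "nat \<Rightarrow> 'a set" and EG :: "nat \<Rightarrow> 'a set set"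
    and v w :: "nat \<Rightarrow> 'a"
  assumes F_graph: "simple_graph VF EF"
    and k: "card EF = k" "k \<ge> 3"
    and F_dom: "dom_one VF EF"
    and s: "s \<ge> 1"
    and G_graphs: "\<forall>j\<in>{1..s}. simple_graph (VG j) (EG j)"
    and G_disj: "\<forall>i\<in>{1..s}. \<forall>j\<in>{1..s}. i \<noteq> j \<longrightarrow> VG i \<inter> VG j = {}"
    and G_type: "\<forall>j\<in>{1..s}. pure_special (card (EG j)) VF EF (VG j) (EG j)
                                \<or> copy_F_plus_e VF EF (VG j) (EG j)"
    and vw: "\<forall>j\<in>{2..s}. v j \<in> VG 1 \<and> w j \<in> VG j"
    and iota_eq: "real (iota (\<Union>j\<in>{1..s}. VG j)
                    ((\<Union>j\<in>{1..s}. EG j) \<union> {{v j, w j} | j. j \<in> {2..s}}) VF EF)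
                  = real (card ((\<Union>j\<in>{1..s}. EG j) \<union> {{v j, w j} | j. j \<in> {2..s}}) + 1)
                    / real (k + 2)"
  shows "special (card ((\<Union>j\<in>{1..s}. EG j) \<union> {{v j, w j} | j. j \<in> {2..s}})) VF EF
            (\<Union>j\<in>{1..s}. VG j) ((\<Union>j\<in>{1..s}. EG j) \<union> {{v j, w j} | j. j \<in> {2..s}})
         \<or> copy_F_plus_e VF EF (\<Union>j\<in>{1..s}. VG j)
            ((\<Union>j\<in>{1..s}. EG j) \<union> {{v j, w j} | j. j \<in> {2..s}})"
proof -
  define V where "V = (\<Union>j\<in>{1..s}. VG j)"
  define C where "C = {{v j, w j} | j. j \<in> {2..s}}"
  define E where "E = (\<Union>j\<in>{1..s}. EG j) \<union> C"
  define m where "m = card E"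
  obtain uF where uF: "uF \<in> VF" "\<forall>x\<in>VF. x \<noteq> uF \<longrightarrow> {uF, x} \<in> EF"
    using F_dom unfolding dom_one_def by blast
  have EFne: "EF \<noteq> {}" using k by auto
  interpret Fctx VF EF uF using F_graph uF EFne by unfold_locales blast+
  define q where "q j = (card (EG j) + 1) div (k + 2)" for j
  have qj: "\<And>j. j \<in> {1..s} \<Longrightarrow> card (EG j) + 1 = q j * (k + 2) \<and> q j \<ge> 1"
  proof -
    fix j assume j: "j \<in> {1..s}"
    show "card (EG j) + 1 = q j * (k + 2) \<and> q j \<ge> 1"
    proof (cases "pure_special (card (EG j)) VF EF (VG j) (EG j)")
      case True
      then have "q j \<ge> 1" "(card (EG j) + 1) mod (k + 2) = 0"
        unfolding pure_special_def Let_def q_def using k(1) by auto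
      moreover have "card (EG j) + 1 = (card (EG j) + 1) div (k + 2) * (k + 2) + (card (EG j) + 1) mod (k + 2)"
        by (rule div_mult_mod_eq[symmetric])
      ultimately show ?thesis unfolding q_def by simp
    next
      case False
      then have "copy_F_plus_e VF EF (VG j) (EG j)" using G_type j by blast
      then have "card (EG j) = k + 1" using copy_facts(3) k(1) by simp
      then show ?thesis unfolding q_def by simp
    qed
  qed
  show ?thesis
  proof (cases "s = 1")
    case True
    have C0: "C = {}" unfolding C_def using True by auto
    have VE: "V = VG 1" "E = EG 1" unfolding V_def E_def C0 using True by auto
    show ?thesis
    proof (cases "pure_special (card (EG 1)) VF EF (VG 1) (EG 1)")
      case True
      then have "special (card (EG 1)) VF EF (VG 1) (EG 1)"
        unfolding pure_special_def special_def Let_def by auto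
      then show ?thesis using VE unfolding V_def E_def C_def by simp
    next
      case False
      then have "copy_F_plus_e VF EF (VG 1) (EG 1)" using G_type True by auto
      then show ?thesis using VE unfolding V_def E_def C_def by simp
    qed
  next
    case False
    then have s2: "s \<ge> 2" using s by simp
    have s1: "(1::nat) \<in> {1..s}" using s by simp
    define Q where "Q = (\<Sum>j\<in>{1..s}. q j)"
    have EGsub: "\<And>j e. j \<in> {1..s} \<Longrightarrow> e \<in> EG j \<Longrightarrow> e \<subseteq> VG j \<and> card e = 2"
      using G_graphs unfolding simple_graph_def by blast
    have finVG: "\<And>j. j \<in> {1..s} \<Longrightarrow> finite (VG j)" using G_graphs unfolding simple_graph_def by blast
    have finEG: "\<And>j. j \<in> {1..s} \<Longrightarrow> finite (EG j)"
    proof -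
      fix j assume j: "j \<in> {1..s}"
      have "EG j \<subseteq> Pow (VG j)" using EGsub[OF j] by blast
      then show "finite (EG j)" using finVG[OF j] by (meson finite_Pow_iff finite_subset)
    qed
    have same: "\<And>x j1 j2. j1 \<in> {1..s} \<Longrightarrow> j2 \<in> {1..s} \<Longrightarrow> x \<in> VG j1 \<Longrightarrow> x \<in> VG j2 \<Longrightarrow> j1 = j2"
      using G_disj by blast
    have cardUE: "card (\<Union>j\<in>{1..s}. EG j) = (\<Sum>j\<in>{1..s}. card (EG j))"
    proof (rule card_UN_disjoint)
      show "finite {1..s}" by simp
      show "\<forall>i\<in>{1..s}. finite (EG i)" using finEG by blast
      show "\<forall>i\<in>{1..s}. \<forall>j\<in>{1..s}. i \<noteq> j \<longrightarrow> EG i \<inter> EG j = {}"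
      proof (intro ballI impI)
        fix i j assume ij: "i \<in> {1..s}" "j \<in> {1..s}" "i \<noteq> j"
        show "EG i \<inter> EG j = {}"
        proof (rule ccontr)
          assume "EG i \<inter> EG j \<noteq> {}"
          then obtain e where e: "e \<in> EG i" "e \<in> EG j" by blast
          then have "card e = 2" using EGsub[OF ij(1)] by blast
          then obtain x where "x \<in> e" by (metis card.empty ex_in_conv zero_neq_numeral)
          then have "x \<in> VG i" "x \<in> VG j" using EGsub[OF ij(1) e(1)] EGsub[OF ij(2) e(2)] by blast+
          then show False using same[OF ij(1) ij(2)] ij(3) by blast
        qed
      qed
    qed
    have disjC: "(\<Union>j\<in>{1..s}. EG j) \<inter> C = {}"
    proof (rule ccontr)
      assume "(\<Union>j\<in>{1..s}. EG j) \<inter> C \<noteq> {}"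
      then obtain j j' where j: "j \<in> {1..s}" "j' \<in> {2..s}" "{v j', w j'} \<in> EG j" unfolding C_def by blast
      have jj: "j' \<in> {1..s}" using j(2) by auto
      have "v j' \<in> VG j" "w j' \<in> VG j" using EGsub[OF j(1) j(3)] by blast+
      moreover have "v j' \<in> VG 1" "w j' \<in> VG j'" using vw j(2) by blast+
      ultimately have "j = 1" "j = j'" using same[OF j(1) s1] same[OF j(1) jj] by blast+
      then show False using j(2) by simp
    qed
    have cardC: "card C = s - 1" using cardC_lemma[OF G_disj vw] unfolding C_def .
    have finC: "finite C"
    proof -
      have "C = (\<lambda>j. {v j, w j}) ` {2..s}" unfolding C_def by blast
      then show ?thesis by simp
    qed
    have "m = (\<Sum>j\<in>{1..s}. card (EG j)) + (s - 1)"
      unfolding m_def E_def using card_Un_disjoint[OF _ finC disjC] finEG cardUE cardC by simp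
    then have "m + 1 = (\<Sum>j\<in>{1..s}. card (EG j)) + s" using s by simp
    also have "\<dots> = (\<Sum>j\<in>{1..s}. card (EG j) + 1)" unfolding sum.distrib by simp
    also have "\<dots> = (\<Sum>j\<in>{1..s}. q j * (k + 2))" using qj by simp
    also have "\<dots> = Q * (k + 2)" unfolding Q_def by (rule sum_distrib_right[symmetric])
    finally have mQ: "m + 1 = Q * (k + 2)" .
    have "real (iota V E VF EF) = real (m + 1) / real (k + 2)"
      using iota_eq unfolding V_def E_def C_def m_def by simp
    also have "\<dots> = real Q"
    proof -
      have "real (m + 1) = real Q * real (k + 2)" using mQ by (metis of_nat_mult)
      moreover have "real (k + 2) > 0" by simp
      ultimately show ?thesis by simp
    qed
    finally have iotaQ: "iota V E VF EF = Q" by simp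
    have "q 1 \<le> Q" unfolding Q_def by (rule member_le_sum) (use s1 in auto)
    then have Q1: "Q \<ge> 1" using qj[OF s1] by simp
    define A where "A j = (if j = 1 then v ` {2..s} else {w j})" for j
    have AV: "\<And>j. j \<in> {1..s} \<Longrightarrow> A j \<subseteq> VG j \<and> A j \<noteq> {}"
    proof -
      fix j assume j: "j \<in> {1..s}"
      show "A j \<subseteq> VG j \<and> A j \<noteq> {}"
      proof (cases "j = 1")
        case True
        have "2 \<in> {2..s}" using s2 by simp
        then show ?thesis unfolding A_def using True vw by auto
      next
        case False
        then have "j \<in> {2..s}" using j by simp
        then show ?thesis unfolding A_def using False vw by auto
      qed
    qed
    have pure_pdec: "\<And>j. j \<in> {1..s} \<Longrightarrow> pure_special (card (EG j)) VF EF (VG j) (EG j) \<Longrightarrow>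
        \<exists>vv FV FE ww TE. pdec (q j) VF EF (VG j) (EG j) vv FV FE ww TE"
    proof -
      fix j assume j: "j \<in> {1..s}" and ps: "pure_special (card (EG j)) VF EF (VG j) (EG j)"
      then have "special_constr (q j) 0 VF EF (VG j) (EG j)" unfolding pure_special_def Let_def q_def using k(1) by simp
      then show "\<exists>vv FV FE ww TE. pdec (q j) VF EF (VG j) (EG j) vv FV FE ww TE"
        using sc_to_pdec qj[OF j] by blast
    qed
    have LA: "\<And>j y. j \<in> {1..s} \<Longrightarrow> y \<in> VG j \<Longrightarrow> \<exists>D\<subseteq>VG j. y \<in> D \<and> card D \<le> q j \<and>
        safe VF EF (EG j) (VG j - closed_nbhd (VG j) (EG j) D)"
    proof -
      fix j y assume j: "j \<in> {1..s}" and y: "y \<in> VG j"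
      show "\<exists>D\<subseteq>VG j. y \<in> D \<and> card D \<le> q j \<and> safe VF EF (EG j) (VG j - closed_nbhd (VG j) (EG j) D)"
      proof (cases "pure_special (card (EG j)) VF EF (VG j) (EG j)")
        case True
        then obtain vv FV FE ww TE where "pdec (q j) VF EF (VG j) (EG j) vv FV FE ww TE" using pure_pdec j by blast
        from A_pure[OF this y] show ?thesis .
      next
        case False
        then have cp: "copy_F_plus_e VF EF (VG j) (EG j)" using G_type j by blast
        obtain D where D: "D \<subseteq> VG j" "y \<in> D" "card D \<le> 1" "safe VF EF (EG j) (VG j - closed_nbhd (VG j) (EG j) D)"
          using A_copy[OF cp y] by blast
        have "card D \<le> q j" using D(3) qj[OF j] by simp
        then show ?thesis using D by blast
      qed
    qed
    have LB: "\<And>j. j \<in> {1..s} \<Longrightarrow> (\<exists>D\<subseteq>VG j. card D + 1 \<le> q j \<and> safe VF EF (EG j) (VG j - closed_nbhd (VG j) (EG j) D - A j))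
        \<or> (\<exists>vv FV FE ww TE. pdec (q j) VF EF (VG j) (EG j) vv FV FE ww TE \<and> A j \<subseteq> vv ` {1..q j})"
    proof -
      fix j assume j: "j \<in> {1..s}"
      show "(\<exists>D\<subseteq>VG j. card D + 1 \<le> q j \<and> safe VF EF (EG j) (VG j - closed_nbhd (VG j) (EG j) D - A j))
        \<or> (\<exists>vv FV FE ww TE. pdec (q j) VF EF (VG j) (EG j) vv FV FE ww TE \<and> A j \<subseteq> vv ` {1..q j})"
      proof (cases "pure_special (card (EG j)) VF EF (VG j) (EG j)")
        case True
        then obtain vv FV FE ww TE where P: "pdec (q j) VF EF (VG j) (EG j) vv FV FE ww TE" using pure_pdec j by blast
        have cE: "card (EG j) + 1 = q j * (card EF + 2)" using qj[OF j] k(1) by simp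
        have a1: "A j \<subseteq> VG j" and a2: "A j \<noteq> {}" using AV[OF j] by blast+
        show ?thesis using B_pure[OF P a1 a2 cE] .
      next
        case False
        then have cp: "copy_F_plus_e VF EF (VG j) (EG j)" using G_type j by blast
        then have "card (EG j) = k + 1" using copy_facts(3) k(1) by simp
        then have "q j = 1" unfolding q_def by simp
        moreover have "safe VF EF (EG j) (VG j - closed_nbhd (VG j) (EG j) {} - A j)"
          using B_copy[OF cp] AV[OF j] by blast
        ultimately show ?thesis by (intro disjI1 exI[of _ "{}"]) simp
      qed
    qed
    have VGV: "\<And>j. j \<in> {1..s} \<Longrightarrow> VG j \<subseteq> V" unfolding V_def by blast
    have EGE: "\<And>j. j \<in> {1..s} \<Longrightarrow> EG j \<subseteq> E" unfolding E_def by blast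
    have edgeE: "\<And>j. j \<in> {2..s} \<Longrightarrow> {v j, w j} \<in> E \<and> {w j, v j} \<in> E"
      unfolding E_def C_def by (auto simp: insert_commute)
    have vV: "\<And>j. j \<in> {2..s} \<Longrightarrow> v j \<in> V \<and> w j \<in> V"
    proof -
      fix j assume j: "j \<in> {2..s}"
      then have "j \<in> {1..s}" by auto
      then show "v j \<in> V \<and> w j \<in> V" using vw j VGV[OF s1] VGV by blast
    qed
    have finish: "\<And>Dj R. (\<forall>j\<in>{1..s}. Dj j \<subseteq> VG j) \<Longrightarrow>
        (\<forall>j\<in>{1..s}. safe VF EF (EG j) (R j) \<and> VG j - closed_nbhd V E (\<Union>j\<in>{1..s}. Dj j) \<subseteq> R j) \<Longrightarrow>
        (\<forall>j\<in>{2..s}. v j \<in> closed_nbhd V E (\<Union>j\<in>{1..s}. Dj j)) \<Longrightarrow>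
        (\<Sum>j\<in>{1..s}. card (Dj j)) < Q \<Longrightarrow> False"
    proof -
      fix Dj :: "nat \<Rightarrow> 'a set" and R :: "nat \<Rightarrow> 'a set"
      assume a1: "\<forall>j\<in>{1..s}. Dj j \<subseteq> VG j"
        and a2: "\<forall>j\<in>{1..s}. safe VF EF (EG j) (R j) \<and> VG j - closed_nbhd V E (\<Union>j\<in>{1..s}. Dj j) \<subseteq> R j"
        and a3: "\<forall>j\<in>{2..s}. v j \<in> closed_nbhd V E (\<Union>j\<in>{1..s}. Dj j)"
        and a4: "(\<Sum>j\<in>{1..s}. card (Dj j)) < Q"
      define D where "D = (\<Union>j\<in>{1..s}. Dj j)"
      have DV: "D \<subseteq> V" unfolding D_def V_def using a1 by blast
      have iso: "isolating_set V E VF EF D"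
        using combine[OF G_disj G_graphs V_def E_def[unfolded C_def] DV, of R] a2 a3 unfolding D_def by blast
      have "card D \<le> (\<Sum>j\<in>{1..s}. card (Dj j))" unfolding D_def by (rule card_UN_le) simp
      then have cD: "card D < Q" using a4 by simp
      have "iota V E VF EF \<le> card D" unfolding iota_def using iso by (intro Least_le) blast
      then show False using cD iotaQ by simp
    qed
    have NDmono: "\<And>j (X::'a set) D. j \<in> {1..s} \<Longrightarrow> X \<subseteq> D \<Longrightarrow> closed_nbhd (VG j) (EG j) X \<subseteq> closed_nbhd V E D"
    proof -
      fix j and X D :: "'a set" assume j: "j \<in> {1..s}" and XD: "X \<subseteq> D"
      show "closed_nbhd (VG j) (EG j) X \<subseteq> closed_nbhd V E D" by (rule closed_nbhd_mono[OF XD VGV[OF j] EGE[OF j]])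
    qed
    show ?thesis
    proof (cases "\<forall>j\<in>{1..s}. \<exists>vv FV FE ww TE. pdec (q j) VF EF (VG j) (EG j) vv FV FE ww TE \<and> A j \<subseteq> vv ` {1..q j}")
      case True
      have "\<forall>j\<in>{1..s}. \<exists>t. pdec (q j) VF EF (VG j) (EG j) (fst t) (fst (snd t)) (fst (snd (snd t)))
              (fst (snd (snd (snd t)))) (snd (snd (snd (snd t)))) \<and> A j \<subseteq> fst t ` {1..q j}"
      proof
        fix j assume j: "j \<in> {1..s}"
        then obtain vv FV FE ww TE where "pdec (q j) VF EF (VG j) (EG j) vv FV FE ww TE \<and> A j \<subseteq> vv ` {1..q j}"
          using True by blast
        then show "\<exists>t. pdec (q j) VF EF (VG j) (EG j) (fst t) (fst (snd t)) (fst (snd (snd t)))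
              (fst (snd (snd (snd t)))) (snd (snd (snd (snd t)))) \<and> A j \<subseteq> fst t ` {1..q j}"
          by (intro exI[of _ "(vv, FV, FE, ww, TE)"]) simp
      qed
      from bchoice[OF this] obtain T where T: "\<forall>j\<in>{1..s}. pdec (q j) VF EF (VG j) (EG j) (fst (T j)) (fst (snd (T j))) (fst (snd (snd (T j))))
              (fst (snd (snd (snd (T j))))) (snd (snd (snd (snd (T j))))) \<and> A j \<subseteq> fst (T j) ` {1..q j}"
        by blast
      define vvF where "vvF j = fst (T j)" for j
      define FVF where "FVF j = fst (snd (T j))" for j
      define FEF where "FEF j = fst (snd (snd (T j)))" for j
      define wwF where "wwF j = fst (snd (snd (snd (T j))))" for j
      define TEF where "TEF j = snd (snd (snd (snd (T j))))" for j
      have P: "\<forall>j\<in>{1..s}. pdec (q j) VF EF (VG j) (EG j) (vvF j) (FVF j) (FEF j) (wwF j) (TEF j)"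
        using T unfolding vvF_def FVF_def FEF_def wwF_def TEF_def by blast
      have AT: "\<And>j. j \<in> {1..s} \<Longrightarrow> A j \<subseteq> vvF j ` {1..q j}" using T unfolding vvF_def by blast
      have conn: "\<forall>j\<in>{2..s}. v j \<in> vvF 1 ` {1..q 1} \<and> w j \<in> vvF j ` {1..q j}"
      proof
        fix j assume j: "j \<in> {2..s}"
        then have j1: "j \<in> {1..s}" "j \<noteq> 1" by auto
        have "v j \<in> A 1" unfolding A_def using j by simp
        moreover have "w j \<in> A j" unfolding A_def using j1(2) by simp
        ultimately show "v j \<in> vvF 1 ` {1..q 1} \<and> w j \<in> vvF j ` {1..q j}"
          using AT[OF s1] AT[OF j1(1)] by blast
      qed
      have sc: "special_constr Q 0 VF EF V E"
        using merge[OF s P G_disj conn] unfolding Q_def V_def E_def C_def .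
      have "(m + 1) div (k + 2) = Q" unfolding mQ by (rule nonzero_mult_div_cancel_right) simp
      moreover have "(m + 1) mod (k + 2) = 0" unfolding mQ by (rule mod_mult_self2_is_0)
      ultimately have "(m + 1) div (k + 2) = Q" "(m + 1) mod (k + 2) = 0" by blast+
      then have "special m VF EF V E" unfolding special_def Let_def using k(1) Q1 sc by simp
      then show ?thesis unfolding m_def V_def E_def C_def by (rule disjI1)
    next
      case False
      then obtain j0 where j0: "j0 \<in> {1..s}"
        "\<not> (\<exists>vv FV FE ww TE. pdec (q j0) VF EF (VG j0) (EG j0) vv FV FE ww TE \<and> A j0 \<subseteq> vv ` {1..q j0})"
        by blast
      then obtain D0 where D0: "D0 \<subseteq> VG j0" "card D0 + 1 \<le> q j0"
        "safe VF EF (EG j0) (VG j0 - closed_nbhd (VG j0) (EG j0) D0 - A j0)"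
        using LB[OF j0(1)] by blast
      have "\<forall>j\<in>{2..s}. \<exists>D. D \<subseteq> VG j \<and> w j \<in> D \<and> card D \<le> q j \<and> safe VF EF (EG j) (VG j - closed_nbhd (VG j) (EG j) D)"
      proof
        fix j assume j: "j \<in> {2..s}"
        then have j1: "j \<in> {1..s}" by auto
        have "w j \<in> VG j" using vw j by blast
        from LA[OF j1 this] show "\<exists>D. D \<subseteq> VG j \<and> w j \<in> D \<and> card D \<le> q j \<and> safe VF EF (EG j) (VG j - closed_nbhd (VG j) (EG j) D)"
          by blast
      qed
      from bchoice[OF this] obtain Dw where Dw: "\<forall>j\<in>{2..s}. Dw j \<subseteq> VG j \<and> w j \<in> Dw j \<and> card (Dw j) \<le> q j \<and>
          safe VF EF (EG j) (VG j - closed_nbhd (VG j) (EG j) (Dw j))" by blast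
      show ?thesis
      proof (cases "j0 = 1")
        case True
        define Dj where "Dj j = (if j = 1 then D0 else Dw j)" for j
        define R where "R j = (if j = 1 then VG 1 - closed_nbhd (VG 1) (EG 1) D0 - A 1
                               else VG j - closed_nbhd (VG j) (EG j) (Dw j))" for j
        define D where "D = (\<Union>j\<in>{1..s}. Dj j)"
        have DjD: "\<And>j. j \<in> {1..s} \<Longrightarrow> Dj j \<subseteq> D" unfolding D_def by blast
        have a1: "\<forall>j\<in>{1..s}. Dj j \<subseteq> VG j"
        proof
          fix j assume j: "j \<in> {1..s}"
          show "Dj j \<subseteq> VG j"
          proof (cases "j = 1")
            case True then show ?thesis unfolding Dj_def using D0(1) \<open>j0 = 1\<close> by simp
          next
            case False then have "j \<in> {2..s}" using j by simp
            then show ?thesis unfolding Dj_def using Dw False by simp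
          qed
        qed
        have cutv: "\<forall>j\<in>{2..s}. v j \<in> closed_nbhd V E D"
        proof
          fix j assume j: "j \<in> {2..s}"
          then have j1: "j \<in> {1..s}" "j \<noteq> 1" by auto
          have "w j \<in> D" using DjD[OF j1(1)] Dw j j1(2) unfolding Dj_def by auto
          then show "v j \<in> closed_nbhd V E D" using closed_nbhd_in[of "v j" V "w j" D E] vV[OF j] edgeE[OF j] by blast
        qed
        have a2: "\<forall>j\<in>{1..s}. safe VF EF (EG j) (R j) \<and> VG j - closed_nbhd V E D \<subseteq> R j"
        proof
          fix j assume j: "j \<in> {1..s}"
          show "safe VF EF (EG j) (R j) \<and> VG j - closed_nbhd V E D \<subseteq> R j"
          proof (cases "j = 1")
            case True
            have "closed_nbhd (VG 1) (EG 1) D0 \<subseteq> closed_nbhd V E D"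
              using NDmono[OF s1 DjD[OF s1]] unfolding Dj_def by simp
            moreover have "A 1 \<subseteq> closed_nbhd V E D" unfolding A_def using cutv by auto
            ultimately show ?thesis unfolding R_def using True D0(3) \<open>j0 = 1\<close> by auto
          next
            case False then have j2: "j \<in> {2..s}" using j by simp
            have "closed_nbhd (VG j) (EG j) (Dw j) \<subseteq> closed_nbhd V E D"
              using NDmono[OF j DjD[OF j]] False unfolding Dj_def by simp
            then show ?thesis unfolding R_def using False Dw j2 by auto
          qed
        qed
        have a4: "(\<Sum>j\<in>{1..s}. card (Dj j)) < Q" unfolding Q_def
        proof (rule sum_strict_mono_ex1)
          show "finite {1..s}" by simp
          show "\<forall>x\<in>{1..s}. card (Dj x) \<le> q x"
          proof
            fix j assume j: "j \<in> {1..s}"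
            show "card (Dj j) \<le> q j"
            proof (cases "j = 1")
              case True then show ?thesis unfolding Dj_def using D0(2) \<open>j0 = 1\<close> by simp
            next
              case False then have "j \<in> {2..s}" using j by simp
              then show ?thesis unfolding Dj_def using Dw False by simp
            qed
          qed
          show "\<exists>a\<in>{1..s}. card (Dj a) < q a" using s1 D0(2) \<open>j0 = 1\<close> unfolding Dj_def by auto
        qed
        show ?thesis using finish[OF a1 a2[unfolded D_def] cutv[unfolded D_def] a4] by blast
      next
        case False
        then have j02: "j0 \<in> {2..s}" using j0(1) by auto
        have "v j0 \<in> VG 1" using vw j02 by blast
        from LA[OF s1 this] obtain D1 where D1: "D1 \<subseteq> VG 1" "v j0 \<in> D1" "card D1 \<le> q 1"
          "safe VF EF (EG 1) (VG 1 - closed_nbhd (VG 1) (EG 1) D1)" by blast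
        define Dj where "Dj j = (if j = 1 then D1 else if j = j0 then D0 else Dw j)" for j
        define R where "R j = (if j = 1 then VG 1 - closed_nbhd (VG 1) (EG 1) D1
                               else if j = j0 then VG j0 - closed_nbhd (VG j0) (EG j0) D0 - A j0
                               else VG j - closed_nbhd (VG j) (EG j) (Dw j))" for j
        define D where "D = (\<Union>j\<in>{1..s}. Dj j)"
        have DjD: "\<And>j. j \<in> {1..s} \<Longrightarrow> Dj j \<subseteq> D" unfolding D_def by blast
        have vD: "v j0 \<in> D" using DjD[OF s1] D1(2) unfolding Dj_def by auto
        have a1: "\<forall>j\<in>{1..s}. Dj j \<subseteq> VG j"
        proof
          fix j assume j: "j \<in> {1..s}"
          show "Dj j \<subseteq> VG j"
          proof (cases "j = 1")
            case True then show ?thesis unfolding Dj_def using D1(1) by simp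
          next
            case False
            show ?thesis
            proof (cases "j = j0")
              case True then show ?thesis unfolding Dj_def using D0(1) \<open>j \<noteq> 1\<close> by simp
            next
              case False
              then have "j \<in> {2..s}" using j \<open>j \<noteq> 1\<close> by simp
              then show ?thesis unfolding Dj_def using Dw False \<open>j \<noteq> 1\<close> by simp
            qed
          qed
        qed
        have cutv: "\<forall>j\<in>{2..s}. v j \<in> closed_nbhd V E D"
        proof
          fix j assume j: "j \<in> {2..s}"
          then have j1: "j \<in> {1..s}" "j \<noteq> 1" by auto
          show "v j \<in> closed_nbhd V E D"
          proof (cases "j = j0")
            case True then show ?thesis using vD closed_nbhd_D[of D V E] by blast
          next
            case False
            have "w j \<in> D" using DjD[OF j1(1)] Dw j j1(2) False unfolding Dj_def by auto
            then show "v j \<in> closed_nbhd V E D" using closed_nbhd_in[of "v j" V "w j" D E] vV[OF j] edgeE[OF j] by blast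
          qed
        qed
        have wN: "w j0 \<in> closed_nbhd V E D"
          using closed_nbhd_in[of "w j0" V "v j0" D E] vV[OF j02] edgeE[OF j02] vD by blast
        have a2: "\<forall>j\<in>{1..s}. safe VF EF (EG j) (R j) \<and> VG j - closed_nbhd V E D \<subseteq> R j"
        proof
          fix j assume j: "j \<in> {1..s}"
          show "safe VF EF (EG j) (R j) \<and> VG j - closed_nbhd V E D \<subseteq> R j"
          proof (cases "j = 1")
            case True
            have "closed_nbhd (VG 1) (EG 1) D1 \<subseteq> closed_nbhd V E D"
              using NDmono[OF s1 DjD[OF s1]] unfolding Dj_def by simp
            then show ?thesis unfolding R_def using True D1(4) by auto
          next
            case False
            show ?thesis
            proof (cases "j = j0")
              case True
              have "closed_nbhd (VG j0) (EG j0) D0 \<subseteq> closed_nbhd V E D"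
                using NDmono[OF j0(1) DjD[OF j0(1)]] \<open>j0 \<noteq> 1\<close> unfolding Dj_def by simp
              moreover have "A j0 \<subseteq> closed_nbhd V E D" unfolding A_def using wN \<open>j0 \<noteq> 1\<close> by simp
              ultimately show ?thesis unfolding R_def using True \<open>j \<noteq> 1\<close> D0(3) by auto
            next
              case False
              then have j2: "j \<in> {2..s}" using j \<open>j \<noteq> 1\<close> by simp
              have "closed_nbhd (VG j) (EG j) (Dw j) \<subseteq> closed_nbhd V E D"
                using NDmono[OF j DjD[OF j]] False \<open>j \<noteq> 1\<close> unfolding Dj_def by simp
              then show ?thesis unfolding R_def using False \<open>j \<noteq> 1\<close> Dw j2 by auto
            qed
          qed
        qed
        have a4: "(\<Sum>j\<in>{1..s}. card (Dj j)) < Q" unfolding Q_def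
        proof (rule sum_strict_mono_ex1)
          show "finite {1..s}" by simp
          show "\<forall>x\<in>{1..s}. card (Dj x) \<le> q x"
          proof
            fix j assume j: "j \<in> {1..s}"
            show "card (Dj j) \<le> q j"
            proof (cases "j = 1")
              case True then show ?thesis unfolding Dj_def using D1(3) by simp
            next
              case False
              show ?thesis
              proof (cases "j = j0")
                case True then show ?thesis unfolding Dj_def using D0(2) \<open>j \<noteq> 1\<close> by simp
              next
                case False
                then have "j \<in> {2..s}" using j \<open>j \<noteq> 1\<close> by simp
                then show ?thesis unfolding Dj_def using Dw False \<open>j \<noteq> 1\<close> by simp
              qed
            qed
          qed
          show "\<exists>a\<in>{1..s}. card (Dj a) < q a"
            using j0(1) D0(2) \<open>j0 \<noteq> 1\<close> unfolding Dj_def by (intro bexI[of _ j0]) auto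
        qed
        show ?thesis using finish[OF a1 a2[unfolded D_def] cutv[unfolded D_def] a4] by blast
      qed
    qed
  qed
qed

end
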